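(* Let $H:[0,T]\times\mathbb{R}^N\times\mathbb{R}^N\to\mathbb{R}$ satisfy condition (A) (see context). Then there exist functions $f:[0,T]\times\mathbb{R}^N\times\mathbb{B}\to\mathbb{R}^N$ and $l:[0,T]\times\mathbb{R}^N\times\mathbb{B}\to\mathbb{R}$, where $\mathbb{B}$ is the closed unit ball in $\mathbb{R}^{N+1}$, such that $H(t,x,p)=\sup_{a\in\mathbb{B}}\{\langle p,f(t,x,a)\rangle-l(t,x,a)\}$ for all $t,x,p$, and (R1) $f$ and $l$ are continuous; (R2) for every $R\geq0$ there is an integrable $K_R:[0,T]\to[0,\infty)$ with $|f(t,x,a)-f(t,y,a)|+|l(t,x,a)-l(t,y,a)|\leq K_R(t)|x-y|$ for all $x,y\in\mathbb{B}_R$, $a\in\mathbb{B}$ and a.e. $t\in[0,T]$; (R3) there is an integrable $C:[0,T]\to[0,\infty)$ with $|f(t,x,a)|+|l(t,x,a)|\leq C(t)(1+|x|)$ for all $x\in\mathbb{R}^N$, $a\in\mathbb{B}$ and a.e. $t\in[0,T]$.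
   Context: $\mathbb{B}_R$ is the closed ball of radius $R$ centered at $0$; $\|W\|:=\sup_{\xi\in W}|\xi|$; $H^*(t,x,v)=\sup_p\{\langle v,p\rangle-H(t,x,p)\}$ and $\mathrm{dom}\,H^*(t,x,\cdot)=\{v:H^*(t,x,v)\neq\pm\infty\}$. Conditions: (H1) $H$ continuous in all variables. (H2) $H(t,x,\cdot)$ convex. (H3) for every $R\geq0$ there is $C_R\geq0$ with $|H(t,x,p)-H(t,x,q)|\leq C_R|p-q|$ for $t\in[0,T]$, $x\in\mathbb{B}_R$, all $p,q$. (H4) there is an integrable $c\geq0$ with $|H(t,x,p)-H(t,x,q)|\leq c(t)(1+|x|)|p-q|$ for a.e. $t$, all $x,p,q$. (H5) for every $R\geq0$ there is an integrable $k_R\geq0$ with $|H(t,x,p)-H(t,y,p)|\leq k_R(t)(1+|p|)|x-y|$ for $x,y\in\mathbb{B}_R$, all $p$, a.e. $t$. Condition (A): $H$ satisfies (H1)–(H5) and there is a continuous $\lambda:[0,T]\times\mathbb{R}^N\to[0,\infty)$ with $\|\mathrm{dom}\,H^*(t,x,\cdot)\|\leq\lambda(t,x)$ and $\|H^*(t,x,\mathrm{dom}\,H^*(t,x,\cdot))\|\leq\lambda(t,x)$ for all $t,x$; for every $R\geq0$ there is an integrable $\zeta_R\geq 0$ such that $\lambda(t,\cdot)$ is $\zeta_R(t)$-Lipschitz on $\mathbb{B}_R$ for a.e. $t$; and there is an integrable $\vartheta\geq0$ with $\lambda(t,x)\leq\vartheta(t)(1+|x|)$ for all $x$ and a.e.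 $t$. *)

theory Defs
  imports "HOL-Analysis.Analysis"
begin

text \<open>R^N is modelled by a euclidean_space type 'a; R^(N+1) by 'a \<times> real
  (Euclidean norm). Functions are total but conditions only concern t in [0,T].\<close>

definition Hstar :: "(real \<Rightarrow> 'a::euclidean_space \<Rightarrow> 'a \<Rightarrow> real) \<Rightarrow> real \<Rightarrow> 'a \<Rightarrow> 'a \<Rightarrow> ereal" where
  "Hstar H t x v = (SUP p. ereal (inner v p - H t x p))"

definition domHstar :: "(real \<Rightarrow> 'a::euclidean_space \<Rightarrow> 'a \<Rightarrow> real) \<Rightarrow> real \<Rightarrow> 'a \<Rightarrow> 'a set" where
  "domHstar H t x = {v. Hstar H t x v \<noteq> \<infinity> \<and> Hstar H t x v \<noteq> -\<infinity>}"

definition int_nonneg :: "real \<Rightarrow> (real \<Rightarrow> real) \<Rightarrow> bool" where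
  "int_nonneg T c \<longleftrightarrow> c integrable_on {0..T} \<and> (\<forall>t\<in>{0..T}. c t \<ge> 0)"

definition H1 :: "real \<Rightarrow> (real \<Rightarrow> 'a::euclidean_space \<Rightarrow> 'a \<Rightarrow> real) \<Rightarrow> bool" where
  "H1 T H \<longleftrightarrow> continuous_on ({0..T} \<times> UNIV \<times> UNIV) (\<lambda>(t, x, p). H t x p)"

definition H2 :: "real \<Rightarrow> (real \<Rightarrow> 'a::euclidean_space \<Rightarrow> 'a \<Rightarrow> real) \<Rightarrow> bool" where
  "H2 T H \<longleftrightarrow> (\<forall>t\<in>{0..T}. \<forall>x. convex_on UNIV (H t x))"

definition H3 :: "real \<Rightarrow> (real \<Rightarrow> 'a::euclidean_space \<Rightarrow> 'a \<Rightarrow> real) \<Rightarrow> bool" where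
  "H3 T H \<longleftrightarrow> (\<forall>R\<ge>0. \<exists>C\<ge>0. \<forall>t\<in>{0..T}. \<forall>x\<in>cball 0 R. \<forall>p q.
      \<bar>H t x p - H t x q\<bar> \<le> C * norm (p - q))"

definition H4 :: "real \<Rightarrow> (real \<Rightarrow> 'a::euclidean_space \<Rightarrow> 'a \<Rightarrow> real) \<Rightarrow> bool" where
  "H4 T H \<longleftrightarrow> (\<exists>c. int_nonneg T c \<and> (AE t in lebesgue. t \<in> {0..T} \<longrightarrow>
      (\<forall>x p q. \<bar>H t x p - H t x q\<bar> \<le> c t * (1 + norm x) * norm (p - q))))"

definition H5 :: "real \<Rightarrow> (real \<Rightarrow> 'a::euclidean_space \<Rightarrow> 'a \<Rightarrow> real) \<Rightarrow> bool" where
  "H5 T H \<longleftrightarrow> (\<forall>R\<ge>0. \<exists>k. int_nonneg T k \<and> (AE t in lebesgue. t \<in> {0..T} \<longrightarrow>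
      (\<forall>x\<in>cball 0 R. \<forall>y\<in>cball 0 R. \<forall>p. \<bar>H t x p - H t y p\<bar> \<le> k t * (1 + norm p) * norm (x - y))))"

definition condA :: "real \<Rightarrow> (real \<Rightarrow> 'a::euclidean_space \<Rightarrow> 'a \<Rightarrow> real) \<Rightarrow> bool" where
  "condA T H \<longleftrightarrow> H1 T H \<and> H2 T H \<and> H3 T H \<and> H4 T H \<and> H5 T H \<and>
    (\<exists>lam::real \<Rightarrow> 'a \<Rightarrow> real.
       continuous_on ({0..T} \<times> UNIV) (\<lambda>(t, x). lam t x) \<and>
       (\<forall>t\<in>{0..T}. \<forall>x. lam t x \<ge> 0) \<and>
       (\<forall>t\<in>{0..T}. \<forall>x. \<forall>v\<in>domHstar H t x.
          norm v \<le> lam t x \<and> \<bar>real_of_ereal (Hstar H t x v)\<bar> \<le> lam t x) \<and>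
       (\<forall>R\<ge>0. \<exists>zeta. int_nonneg T zeta \<and> (AE t in lebesgue. t \<in> {0..T} \<longrightarrow>
          (\<forall>x\<in>cball 0 R. \<forall>y\<in>cball 0 R. \<bar>lam t x - lam t y\<bar> \<le> zeta t * norm (x - y)))) \<and>
       (\<exists>theta. int_nonneg T theta \<and> (AE t in lebesgue. t \<in> {0..T} \<longrightarrow>
          (\<forall>x. lam t x \<le> theta t * (1 + norm x)))))"

end

theory Submission
  imports Defs
begin

definition sigf :: "'v::euclidean_space set \<Rightarrow> 'v \<Rightarrow> real" where
  "sigf K z = (SUP k\<in>K. inner k z)"

lemma sigf_bdd: assumes "K \<subseteq> cball 0 R" shows "bdd_above ((\<lambda>k. inner k z) ` K)"
proof -
  have "inner k z \<le> R * norm z" if "k \<in> K" for k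
  proof -
    have "inner k z \<le> norm k * norm z" by (rule norm_cauchy_schwarz)
    also have "\<dots> \<le> R * norm z" by (intro mult_right_mono) (use that assms in auto)
    finally show ?thesis .
  qed
  thus ?thesis by (meson bdd_aboveI2)
qed

lemma sigf_upper: "K \<subseteq> cball 0 R \<Longrightarrow> k \<in> K \<Longrightarrow> inner k z \<le> sigf K z"
  unfolding sigf_def by (rule cSUP_upper[OF _ sigf_bdd])

lemma sigf_least: "K \<noteq> {} \<Longrightarrow> (\<And>k. k\<in>K \<Longrightarrow> inner k z \<le> c) \<Longrightarrow> sigf K z \<le> c"
  unfolding sigf_def by (rule cSUP_least)

lemma sigf_abs: assumes "K \<noteq> {}" "K \<subseteq> cball 0 R" shows "\<bar>sigf K z\<bar> \<le> R * norm z"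
proof -
  have a: "sigf K z \<le> R * norm z"
  proof (rule sigf_least[OF assms(1)])
    fix k assume "k \<in> K"
    have "inner k z \<le> norm k * norm z" by (rule norm_cauchy_schwarz)
    also have "\<dots> \<le> R * norm z" by (intro mult_right_mono) (use \<open>k\<in>K\<close> assms in auto)
    finally show "inner k z \<le> R * norm z" .
  qed
  obtain k where k: "k \<in> K" using assms by auto
  have "- (norm k * norm z) \<le> inner k z"
    using Cauchy_Schwarz_ineq2[of k z] by (simp add: abs_le_iff)
  moreover have "norm k * norm z \<le> R * norm z" by (intro mult_right_mono) (use k assms in auto)
  moreover have "inner k z \<le> sigf K z" by (rule sigf_upper[OF assms(2) k])
  ultimately show ?thesis using a by linarith
qed

lemma sigf_subadd: assumes "K \<noteq> {}" "K \<subseteq> cball 0 R"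
  shows "sigf K (z + w) \<le> sigf K z + sigf K w"
proof (rule sigf_least[OF assms(1)])
  fix k assume "k \<in> K"
  then show "inner k (z + w) \<le> sigf K z + sigf K w"
    using sigf_upper[OF assms(2), of k z] sigf_upper[OF assms(2), of k w]
    by (simp add: inner_add_right)
qed

lemma sigf_scale: assumes "K \<noteq> {}" "K \<subseteq> cball 0 R" "0 \<le> h"
  shows "sigf K (h *\<^sub>R w) \<le> h * sigf K w"
proof (rule sigf_least[OF assms(1)])
  fix k assume "k \<in> K"
  then show "inner k (h *\<^sub>R w) \<le> h * sigf K w"
    using sigf_upper[OF assms(2), of k w] assms(3)
    by (simp add: mult_left_mono)
qed

lemma sigf_lip: assumes "K \<noteq> {}" "K \<subseteq> cball 0 R"
  shows "\<bar>sigf K z - sigf K z'\<bar> \<le> R * norm (z - z')"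
proof -
  have 1: "sigf K z \<le> sigf K z' + R * norm (z - z')"
    using sigf_subadd[OF assms, of z' "z - z'"] sigf_abs[OF assms, of "z - z'"] by simp
  have 2: "sigf K z' \<le> sigf K z + R * norm (z - z')"
    using sigf_subadd[OF assms, of z "z' - z"] sigf_abs[OF assms, of "z' - z"]
    by (simp add: norm_minus_commute)
  from 1 2 show ?thesis by linarith
qed

lemma sigf_cont: assumes "K \<noteq> {}" "K \<subseteq> cball 0 R"
  shows "continuous_on UNIV (sigf K)"
proof -
  have R: "0 \<le> R" using assms by (auto simp: subset_iff) (meson norm_ge_zero order_trans)
  have "lipschitz_on R UNIV (sigf K)"
    by (rule lipschitz_onI) (use sigf_lip[OF assms] R in \<open>auto simp: dist_norm\<close>)
  thus ?thesis by (rule lipschitz_on_continuous_on)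
qed

lemma sigf_single[simp]: "sigf {e} z = inner e z"
  by (simp add: sigf_def)

definition hclose :: "'v::metric_space set \<Rightarrow> 'v set \<Rightarrow> real \<Rightarrow> bool" where
  "hclose K L d \<longleftrightarrow> (\<forall>k\<in>K. \<exists>l\<in>L. dist k l \<le> d) \<and> (\<forall>l\<in>L. \<exists>k\<in>K. dist k l \<le> d)"

lemma hclose_sym: "hclose K L d \<Longrightarrow> hclose L K d"
  unfolding hclose_def by (auto simp: dist_commute)

lemma hclose_mono: "hclose K L d \<Longrightarrow> d \<le> d' \<Longrightarrow> hclose K L d'"
  unfolding hclose_def by (meson order_trans)

lemma sigf_hclose1:
  assumes "K \<noteq> {}" "L \<noteq> {}" "L \<subseteq> cball 0 R'" "\<forall>k\<in>K. \<exists>l\<in>L. dist k l \<le> d"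
  shows "sigf K z \<le> sigf L z + d * norm z"
proof (rule sigf_least[OF assms(1)])
  fix k assume "k \<in> K"
  then obtain l where l: "l \<in> L" "dist k l \<le> d" using assms(4) by auto
  have "inner k z = inner l z + inner (k - l) z" by (simp add: inner_diff_left)
  also have "inner (k - l) z \<le> norm (k - l) * norm z" by (rule norm_cauchy_schwarz)
  also have "norm (k - l) * norm z \<le> d * norm z" using l by (simp add: dist_norm mult_right_mono)
  also have "inner l z \<le> sigf L z" by (rule sigf_upper[OF assms(3) l(1)])
  finally show "inner k z \<le> sigf L z + d * norm z" by simp
qed

lemma sigf_hclose:
  assumes "K \<noteq> {}" "L \<noteq> {}" "K \<subseteq> cball 0 R" "L \<subseteq> cball 0 R'" "hclose K L d"
  shows "\<bar>sigf K z - sigf L z\<bar> \<le> d * norm z"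
  using sigf_hclose1[OF assms(1,2,4), of d z] sigf_hclose1[OF assms(2,1,3), of d z] assms(5)
  unfolding hclose_def by (auto simp: dist_commute)

definition psi :: "'v::euclidean_space \<Rightarrow> real" where
  "psi z = (max 0 (1 - norm z ^ 2))\<^sup>2"

definition Gf :: "'v::euclidean_space \<Rightarrow> 'v" where
  "Gf z = (4 * max 0 (1 - norm z ^ 2)) *\<^sub>R z"

lemma P_deriv: "((\<lambda>y::real. (max 0 y)\<^sup>2) has_real_derivative 2 * max 0 y) (at y)"
proof (cases "y = 0")
  case True
  have "((\<lambda>x. ((max 0 x)\<^sup>2 - (max 0 0)\<^sup>2) / (x - 0)) \<longlongrightarrow> 2 * max 0 (0::real)) (at 0)"
  proof -
    have "((\<lambda>x::real. max 0 x) \<longlongrightarrow> max 0 0) (at 0)"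
      by (intro tendsto_intros)
    then have "((\<lambda>x::real. max 0 x) \<longlongrightarrow> 2 * max 0 0) (at 0)" by simp
    moreover have "\<forall>\<^sub>F x in at (0::real). max 0 x = ((max 0 x)\<^sup>2 - (max 0 0)\<^sup>2) / (x - 0)"
      by (auto simp: eventually_at_filter power2_eq_square max_def)
    ultimately show ?thesis by (rule Lim_transform_eventually)
  qed
  then show ?thesis using True by (simp add: has_field_derivative_iff)
next
  case False
  show ?thesis
  proof (cases "y > 0")
    case True
    have d: "((\<lambda>y::real. y\<^sup>2) has_real_derivative 2 * y) (at y)"
      by (auto intro!: derivative_eq_intros)
    show ?thesis
    proof (rule has_field_derivative_transform_within_open[OF _ _ _])
      show "((\<lambda>y::real. y\<^sup>2) has_real_derivative 2 * max 0 y) (at y)" using d True by simp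
      show "open {(0::real)<..}" by simp
      show "y \<in> {0<..}" using True by simp
      show "\<And>x::real. x \<in> {0<..} \<Longrightarrow> x\<^sup>2 = (max 0 x)\<^sup>2" by (auto simp: max_def)
    qed
  next
    case False2: False
    then have neg: "y < 0" using False by simp
    show ?thesis
    proof (rule has_field_derivative_transform_within_open[OF _ _ _])
      show "((\<lambda>y::real. 0) has_real_derivative 2 * max 0 y) (at y)" using neg by simp
      show "open {..<(0::real)}" by simp
      show "y \<in> {..<0}" using neg by simp
      show "\<And>x::real. x \<in> {..<0} \<Longrightarrow> 0 = (max 0 x)\<^sup>2" by (auto simp: max_def)
    qed
  qed
qed

lemma psi_deriv: "((\<lambda>h. psi (z - h *\<^sub>R w)) has_real_derivative inner (Gf z) w) (at 0)"
proof -
  have eq: "(\<lambda>h. psi (z - h *\<^sub>R w)) =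
      (\<lambda>h. (max 0 (1 - (inner z z - 2 * h * inner z w + h\<^sup>2 * inner w w)))\<^sup>2)"
  proof (rule ext)
    fix h
    have "norm (z - h *\<^sub>R w) ^ 2 = inner z z - 2 * h * inner z w + h\<^sup>2 * inner w w"
      unfolding power2_norm_eq_inner by (simp add: inner_diff_left inner_diff_right
        inner_commute algebra_simps power2_eq_square)
    then show "psi (z - h *\<^sub>R w) = (max 0 (1 - (inner z z - 2 * h * inner z w + h\<^sup>2 * inner w w)))\<^sup>2"
      by (simp add: psi_def)
  qed
  have q: "((\<lambda>h. 1 - (inner z z - 2 * h * inner z w + h\<^sup>2 * inner w w)) has_real_derivative
      2 * inner z w) (at 0)"
    by (auto intro!: derivative_eq_intros)
  have "((\<lambda>h. (max 0 (1 - (inner z z - 2 * h * inner z w + h\<^sup>2 * inner w w)))\<^sup>2)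
      has_real_derivative (2 * max 0 (1 - (inner z z - 2 * 0 * inner z w + 0\<^sup>2 * inner w w))) * (2 * inner z w)) (at 0)"
    by (rule DERIV_chain2[OF P_deriv q])
  moreover have "(2 * max 0 (1 - (inner z z - 2 * 0 * inner z w + 0\<^sup>2 * inner w w))) * (2 * inner z w)
      = inner (Gf z) w"
    by (simp add: Gf_def power2_norm_eq_inner)
  ultimately show ?thesis by (simp add: eq)
qed

lemma psi_nonneg: "0 \<le> psi z" by (simp add: psi_def)

lemma psi_zero: "1 \<le> norm z \<Longrightarrow> psi z = 0"
proof -
  assume "1 \<le> norm z"
  then have "1 \<le> norm z ^ 2" by (metis one_le_power)
  thus ?thesis by (simp add: psi_def max_def)
qed

lemma psi_le1: "psi z \<le> 1"
proof -
  have "max 0 (1 - norm z ^ 2) \<le> 1" by simp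
  moreover have "0 \<le> max 0 (1 - norm z ^ 2)" by simp
  ultimately show ?thesis unfolding psi_def by (simp add: power_le_one)
qed

lemma psi_cont: "continuous_on UNIV psi"
  unfolding psi_def by (intro continuous_intros)

lemma Gf_cont: "continuous_on UNIV Gf"
  unfolding Gf_def by (intro continuous_intros)

lemma psi_lip: "\<bar>psi a - psi b\<bar> \<le> 2 * (norm a + norm b) * dist a b"
proof -
  define y where "y = 1 - norm a ^ 2"
  define y' where "y' = 1 - norm b ^ 2"
  have "psi a - psi b = (max 0 y - max 0 y') * (max 0 y + max 0 y')"
    by (simp add: psi_def y_def y'_def power2_eq_square algebra_simps)
  then have "\<bar>psi a - psi b\<bar> = \<bar>max 0 y - max 0 y'\<bar> * \<bar>max 0 y + max 0 y'\<bar>"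
    by (simp add: abs_mult)
  also have "\<dots> \<le> \<bar>y - y'\<bar> * 2"
  proof (rule mult_mono)
    show "\<bar>max 0 y - max 0 y'\<bar> \<le> \<bar>y - y'\<bar>" by (simp add: max_def abs_if)
    have "0 \<le> norm a ^2" "0 \<le> norm b ^2" by simp_all
    then show "\<bar>max 0 y + max 0 y'\<bar> \<le> 2" unfolding y_def y'_def max_def by smt
  qed auto
  also have "\<bar>y - y'\<bar> = \<bar>norm b - norm a\<bar> * (norm a + norm b)"
  proof -
    have "y - y' = (norm b - norm a) * (norm a + norm b)"
      by (simp add: y_def y'_def power2_eq_square algebra_simps)
    then show ?thesis by (simp add: abs_mult)
  qed
  also have "\<dots> \<le> dist a b * (norm a + norm b)"
    by (intro mult_right_mono) (auto simp: dist_norm, metis norm_minus_commute norm_triangle_ineq3)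
  finally show ?thesis by (simp add: algebra_simps)
qed

lemma cont_meas: "continuous_on UNIV f \<Longrightarrow> (f::'v::euclidean_space \<Rightarrow> 'b::euclidean_space) \<in> borel_measurable lborel"
  by (simp add: borel_measurable_continuous_onI)

lemma h_lim: "(\<lambda>n::nat. 1 / ((1 + c) + real n)) \<longlonglongrightarrow> 0"
  by (rule tendsto_divide_0[OF tendsto_const filterlim_at_top_imp_at_infinity[OF
        filterlim_tendsto_add_at_top[OF tendsto_const filterlim_real_sequentially]]])

lemma psiQ_bound:
  fixes z w :: "'v::euclidean_space"
  assumes "0 < h" "h * norm w \<le> 1"
  shows "\<bar>(psi (z - h *\<^sub>R w) - psi z) / h\<bar> \<le> indicator (cball 0 2) z * (10 * norm w)"
proof (cases "norm z \<le> 2")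
  case True
  have nw: "norm (h *\<^sub>R w) = h * norm w" using assms by simp
  have "norm (z - h *\<^sub>R w) \<le> norm z + norm (h *\<^sub>R w)" by (rule norm_triangle_ineq4)
  then have n3: "norm (z - h *\<^sub>R w) + norm z \<le> 5" using True nw assms by linarith
  have "\<bar>psi (z - h *\<^sub>R w) - psi z\<bar> \<le> 2 * (norm (z - h *\<^sub>R w) + norm z) * dist (z - h *\<^sub>R w) z"
    by (rule psi_lip)
  also have "dist (z - h *\<^sub>R w) z = h * norm w" using assms by (simp add: dist_norm)
  also have "2 * (norm (z - h *\<^sub>R w) + norm z) * (h * norm w) \<le> 2 * 5 * (h * norm w)"
    by (intro mult_right_mono) (use n3 assms in auto)
  finally have "\<bar>psi (z - h *\<^sub>R w) - psi z\<bar> \<le> h * (10 * norm w)" by simp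
  then have "\<bar>psi (z - h *\<^sub>R w) - psi z\<bar> / h \<le> 10 * norm w"
    using assms by (simp add: divide_le_eq mult.commute)
  moreover have "\<bar>(psi (z - h *\<^sub>R w) - psi z) / h\<bar> = \<bar>psi (z - h *\<^sub>R w) - psi z\<bar> / h"
  proof -
    have hh: "\<bar>h\<bar> = h" using assms(1) by simp
    show ?thesis by (simp only: abs_divide hh)
  qed
  moreover have "indicator (cball 0 2) z = (1::real)" using True by simp
  ultimately show ?thesis by (metis mult_1)
next
  case False
  have nw: "norm (h *\<^sub>R w) = h * norm w" using assms by simp
  have "norm z - norm (h *\<^sub>R w) \<le> norm (z - h *\<^sub>R w)" by (rule norm_triangle_ineq2)
  then have "1 \<le> norm (z - h *\<^sub>R w)" using False nw assms by linarith
  then have "psi (z - h *\<^sub>R w) = 0" by (rule psi_zero)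
  moreover have "psi z = 0" using False by (intro psi_zero) simp
  ultimately show ?thesis by simp
qed

lemma integrable_cont_psi:
  fixes s :: "'v::euclidean_space \<Rightarrow> real"
  assumes "continuous_on UNIV s"
  shows "integrable lborel (\<lambda>z. s z * psi (z - c))"
proof -
  have int: "integrable lborel (\<lambda>z. indicator (cball c 1) z *\<^sub>R (s z * psi (z - c)))"
    by (rule borel_integrable_compact) (auto intro!: continuous_intros
        continuous_on_subset[OF assms] continuous_on_compose2[OF psi_cont])
  have eq: "(\<lambda>z. indicator (cball c 1) z *\<^sub>R (s z * psi (z - c))) = (\<lambda>z. s z * psi (z - c))"
    by (rule ext, case_tac "z \<in> cball c 1") (auto simp: psi_zero dist_norm norm_minus_commute)
  from int show ?thesis unfolding eq .
qed

lemma integrable_cont_psi0: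
  fixes s :: "'v::euclidean_space \<Rightarrow> real"
  assumes "continuous_on UNIV s"
  shows "integrable lborel (\<lambda>z. s z * psi z)"
  using integrable_cont_psi[OF assms, of 0] by simp

lemma integrable_cont_Gf:
  fixes s :: "'v::euclidean_space \<Rightarrow> real"
  assumes "continuous_on UNIV s"
  shows "integrable lborel (\<lambda>z. s z *\<^sub>R Gf z)"
proof -
  have int: "integrable lborel (\<lambda>z. indicator (cball 0 1) z *\<^sub>R (s z *\<^sub>R Gf z))"
    by (rule borel_integrable_compact) (auto intro!: continuous_intros
        continuous_on_subset[OF assms] continuous_on_subset[OF Gf_cont])
  have eq0: "indicator (cball 0 1) z *\<^sub>R (s z *\<^sub>R Gf z) = s z *\<^sub>R Gf z" for z
  proof (cases "z \<in> cball 0 1")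
    case False
    then have "1 < norm z" by simp
    then have "1 < norm z ^ 2" by (simp add: one_less_power)
    then have "max 0 (1 - norm z ^ 2) = 0" by simp
    then show ?thesis using False by (simp add: Gf_def)
  qed simp
  have eq: "(\<lambda>z. indicator (cball 0 1) z *\<^sub>R (s z *\<^sub>R Gf z)) = (\<lambda>z. s z *\<^sub>R Gf z)"
    by (rule ext) (rule eq0)
  from int show ?thesis unfolding eq .
qed

lemma translate_int:
  fixes s :: "'v::euclidean_space \<Rightarrow> real"
  assumes "continuous_on UNIV s"
  shows "(\<integral>z. s z * psi (z - c) \<partial>lborel) = (\<integral>z. s (z + c) * psi z \<partial>lborel)"
proof -
  have sm[measurable]: "s \<in> borel_measurable borel" by (rule borel_measurable_continuous_onI[OF assms])
  have pm[measurable]: "psi \<in> borel_measurable (borel :: 'v measure)"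
    by (rule borel_measurable_continuous_onI[OF psi_cont])
  have "(\<integral>z. s z * psi (z - c) \<partial>lborel) = (\<integral>z. s z * psi (z - c) \<partial>(distr lborel borel ((+) c)))"
    by (simp add: lborel_distr_plus)
  also have "\<dots> = (\<integral>z. s (c + z) * psi (c + z - c) \<partial>lborel)"
    by (rule integral_distr) auto
  finally show ?thesis by (simp add: add.commute)
qed

lemma quot_identity:
  fixes s :: "'v::euclidean_space \<Rightarrow> real"
  assumes cs: "continuous_on UNIV s"
  shows "(\<integral>z. s z * ((psi (z - h *\<^sub>R w) - psi z) / h) \<partial>lborel)
       = (\<integral>z. (s (z + h *\<^sub>R w) - s z) / h * psi z \<partial>lborel)"
proof -
  have cs2: "continuous_on UNIV (\<lambda>z. s (z + h *\<^sub>R w))"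
    by (rule continuous_on_compose2[OF cs]) (auto intro!: continuous_intros)
  have "(\<integral>z. s z * ((psi (z - h *\<^sub>R w) - psi z) / h) \<partial>lborel)
      = (\<integral>z. (s z * psi (z - h *\<^sub>R w) - s z * psi z) / h \<partial>lborel)"
    by (simp add: algebra_simps diff_divide_distrib)
  also have "\<dots> = ((\<integral>z. s z * psi (z - h *\<^sub>R w) \<partial>lborel) - (\<integral>z. s z * psi z \<partial>lborel)) / h"
    by (simp add: integral_divide_zero integral_diff integrable_cont_psi[OF cs] integrable_cont_psi0[OF cs])
  also have "(\<integral>z. s z * psi (z - h *\<^sub>R w) \<partial>lborel) = (\<integral>z. s (z + h *\<^sub>R w) * psi z \<partial>lborel)"
    by (rule translate_int[OF cs])
  also have "((\<integral>z. s (z + h *\<^sub>R w) * psi z \<partial>lborel) - (\<integral>z. s z * psi z \<partial>lborel)) / h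
      = (\<integral>z. (s (z + h *\<^sub>R w) * psi z - s z * psi z) / h \<partial>lborel)"
    by (simp add: integral_divide_zero integral_diff integrable_cont_psi0[OF cs] integrable_cont_psi0[OF cs2])
  also have "\<dots> = (\<integral>z. (s (z + h *\<^sub>R w) - s z) / h * psi z \<partial>lborel)"
    by (simp add: algebra_simps diff_divide_distrib)
  finally show ?thesis .
qed

lemma steiner_lim:
  fixes s :: "'v::euclidean_space \<Rightarrow> real"
  assumes cs: "continuous_on UNIV s"
  shows "(\<lambda>n. \<integral>z. s z * ((psi (z - (1 / ((1 + norm w) + real n)) *\<^sub>R w) - psi z) / (1 / ((1 + norm w) + real n))) \<partial>lborel)
     \<longlonglongrightarrow> (\<integral>z. s z * inner (Gf z) w \<partial>lborel)"
proof -
  define h where "h = (\<lambda>n::nat. 1 / ((1 + norm w) + real n))"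
  have hpos: "0 < h n" for n unfolding h_def by (simp add: add_pos_nonneg)
  have hw: "h n * norm w \<le> 1" for n
    unfolding h_def by (simp add: divide_le_eq add_pos_nonneg)
  have sm[measurable]: "s \<in> borel_measurable borel" by (rule borel_measurable_continuous_onI[OF assms])
  have pm[measurable]: "psi \<in> borel_measurable (borel :: 'v measure)"
    by (rule borel_measurable_continuous_onI[OF psi_cont])
  have gm[measurable]: "Gf \<in> borel_measurable (borel :: 'v measure)"
    by (rule borel_measurable_continuous_onI[OF Gf_cont])
  have "(\<lambda>n. \<integral>z. s z * ((psi (z - h n *\<^sub>R w) - psi z) / h n) \<partial>lborel)
     \<longlonglongrightarrow> (\<integral>z. s z * inner (Gf z) w \<partial>lborel)"
  proof (rule integral_dominated_convergence[where w="\<lambda>z. indicator (cball 0 2) z *\<^sub>R (\<bar>s z\<bar> * (10 * norm w))"])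
    show "(\<lambda>z. s z * inner (Gf z) w) \<in> borel_measurable lborel"
      by (intro cont_meas continuous_intros cs Gf_cont)
    show "(\<lambda>z. s z * ((psi (z - h n *\<^sub>R w) - psi z) / h n)) \<in> borel_measurable lborel" for n
      using hpos[of n] by (intro cont_meas continuous_intros cs continuous_on_compose2[OF psi_cont]) auto
    show "integrable lborel (\<lambda>z. indicator (cball 0 2) z *\<^sub>R (\<bar>s z\<bar> * (10 * norm w)))"
      by (rule borel_integrable_compact) (auto intro!: continuous_intros continuous_on_subset[OF cs])
    show "AE z in lborel. (\<lambda>n. s z * ((psi (z - h n *\<^sub>R w) - psi z) / h n)) \<longlonglongrightarrow> s z * inner (Gf z) w"
    proof (rule AE_I2)
      fix z :: 'v
      have "((\<lambda>y. (psi (z - y *\<^sub>R w) - psi (z - 0 *\<^sub>R w)) / (y - 0)) \<longlongrightarrow> inner (Gf z) w) (at 0)"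
        using psi_deriv[of z w] by (simp add: has_field_derivative_iff)
      moreover have "\<forall>i. h i \<in> UNIV - {0}" using hpos by (metis DiffI UNIV_I less_irrefl singletonD)
      moreover have "h \<longlonglongrightarrow> 0" unfolding h_def by (rule h_lim)
      ultimately have "((\<lambda>y. (psi (z - y *\<^sub>R w) - psi (z - 0 *\<^sub>R w)) / (y - 0)) \<circ> h) \<longlonglongrightarrow> inner (Gf z) w"
        unfolding tendsto_at_iff_sequentially by blast
      then have "(\<lambda>n. (psi (z - h n *\<^sub>R w) - psi z) / h n) \<longlonglongrightarrow> inner (Gf z) w"
        by (simp add: o_def)
      then show "(\<lambda>n. s z * ((psi (z - h n *\<^sub>R w) - psi z) / h n)) \<longlonglongrightarrow> s z * inner (Gf z) w"
        by (intro tendsto_mult tendsto_const)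
    qed
    show "AE z in lborel. norm (s z * ((psi (z - h n *\<^sub>R w) - psi z) / h n))
        \<le> indicator (cball 0 2) z *\<^sub>R (\<bar>s z\<bar> * (10 * norm w))" for n
    proof (rule AE_I2)
      fix z :: 'v
      have "\<bar>s z * ((psi (z - h n *\<^sub>R w) - psi z) / h n)\<bar> = \<bar>s z\<bar> * \<bar>(psi (z - h n *\<^sub>R w) - psi z) / h n\<bar>"
        by (simp add: abs_mult)
      also have "\<dots> \<le> \<bar>s z\<bar> * (indicator (cball 0 2) z * (10 * norm w))"
        using hpos[of n] hw[of n] by (intro mult_left_mono psiQ_bound) auto
      finally show "norm (s z * ((psi (z - h n *\<^sub>R w) - psi z) / h n))
        \<le> indicator (cball 0 2) z *\<^sub>R (\<bar>s z\<bar> * (10 * norm w))" by (simp add: algebra_simps)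
    qed
  qed
  then show ?thesis unfolding h_def .
qed

definition stp :: "'v::euclidean_space set \<Rightarrow> 'v" where
  "stp (K::'v set) = (1 / (\<integral>z. psi (z::'v) \<partial>lborel)) *\<^sub>R (\<integral>z. sigf K z *\<^sub>R Gf z \<partial>lborel)"

lemma Psi_pos: "0 < (\<integral>z. psi z \<partial>(lborel :: 'v::euclidean_space measure))"
proof -
  have "(\<integral>z. (9/16::real) * indicator (cball (0::'v) (1/2)) z \<partial>lborel) \<le> (\<integral>z. psi (z::'v) \<partial>lborel)"
  proof (rule Bochner_Integration.integral_mono)
    show "integrable lborel (\<lambda>z. (9/16::real) * indicator (cball (0::'v) (1/2)) z)"
      by (intro integrable_mult_right integrable_real_indicator emeasure_bounded_finite) auto
    show "integrable lborel (psi :: 'v \<Rightarrow> real)"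
      using integrable_cont_psi0[of "\<lambda>_. 1"] by simp
    fix z :: 'v
    show "(9/16::real) * indicator (cball (0::'v) (1/2)) z \<le> psi z"
    proof (cases "norm z \<le> 1/2")
      case True
      have "norm z ^ 2 \<le> (1/2)^2" using True by (intro power_mono) auto
      then have a: "3/4 \<le> max 0 (1 - norm z ^ 2)" by (simp add: power2_eq_square)
      have "(3/4::real)^2 \<le> (max 0 (1 - norm z ^ 2))^2" by (rule power_mono[OF a]) simp
      then show ?thesis using True by (simp add: psi_def power2_eq_square)
    qed (simp add: psi_nonneg)
  qed
  moreover have "(\<integral>z. (9/16::real) * indicator (cball (0::'v) (1/2)) z \<partial>lborel) = 9/16 * measure lborel (cball (0::'v) (1/2))"
    by simp
  moreover have "0 < measure lborel (cball (0::'v) (1/2))" by simp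
  ultimately show ?thesis by linarith
qed

lemma stp_inner:
  fixes K :: "'v::euclidean_space set"
  assumes "K \<noteq> {}" "K \<subseteq> cball 0 R"
  shows "inner (stp K) w = (\<integral>z. sigf K z * inner (Gf z) w \<partial>lborel) / (\<integral>z. psi (z::'v) \<partial>lborel)"
proof -
  have "(\<integral>z. sigf K z * inner (Gf z) w \<partial>lborel) = (\<integral>z. inner (sigf K z *\<^sub>R Gf z) w \<partial>lborel)"
    by simp
  also have "\<dots> = inner (\<integral>z. sigf K z *\<^sub>R Gf z \<partial>lborel) w"
    by (rule integral_inner_left) (rule integrable_cont_Gf[OF sigf_cont[OF assms]])
  finally show ?thesis unfolding stp_def by simp
qed

lemma steiner_ineq:
  fixes K :: "'v::euclidean_space set"
  assumes K: "K \<noteq> {}" "K \<subseteq> cball 0 R"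
  shows "(\<integral>z. sigf K z * inner (Gf z) w \<partial>lborel) \<le> sigf K w * (\<integral>z. psi (z::'v) \<partial>lborel)"
proof (rule LIMSEQ_le_const2[OF steiner_lim[OF sigf_cont[OF K], of w]], intro exI allI impI)
  fix n :: nat
  define h where "h = 1 / ((1 + norm w) + real n)"
  have hpos: "0 < h" unfolding h_def by (simp add: add_pos_nonneg)
  have c1: "continuous_on UNIV (\<lambda>z. (sigf K (z + h *\<^sub>R w) - sigf K z) / h)"
    by (intro continuous_intros continuous_on_compose2[OF sigf_cont[OF K]]) (use hpos in auto)
  have "(\<integral>z. sigf K z * ((psi (z - h *\<^sub>R w) - psi z) / h) \<partial>lborel)
       = (\<integral>z. (sigf K (z + h *\<^sub>R w) - sigf K z) / h * psi z \<partial>lborel)"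
    by (rule quot_identity[OF sigf_cont[OF K]])
  also have "\<dots> \<le> (\<integral>z. sigf K w * psi (z::'v) \<partial>lborel)"
  proof (rule Bochner_Integration.integral_mono)
    show "integrable lborel (\<lambda>z. (sigf K (z + h *\<^sub>R w) - sigf K z) / h * psi z)"
      by (rule integrable_cont_psi0[OF c1])
    show "integrable lborel (\<lambda>z. sigf K w * psi (z::'v))"
      by (rule integrable_cont_psi0) simp
    fix z :: 'v
    have "sigf K (z + h *\<^sub>R w) \<le> sigf K z + sigf K (h *\<^sub>R w)" by (rule sigf_subadd[OF K])
    also have "sigf K (h *\<^sub>R w) \<le> h * sigf K w" by (rule sigf_scale[OF K]) (use hpos in simp)
    finally have "(sigf K (z + h *\<^sub>R w) - sigf K z) / h \<le> sigf K w"
      using hpos by (simp add: divide_le_eq mult.commute)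
    then show "(sigf K (z + h *\<^sub>R w) - sigf K z) / h * psi z \<le> sigf K w * psi z"
      by (rule mult_right_mono) (rule psi_nonneg)
  qed
  also have "\<dots> = sigf K w * (\<integral>z. psi (z::'v) \<partial>lborel)" by simp
  finally show "(\<integral>z. sigf K z * ((psi (z - (1 / ((1 + norm w) + real n)) *\<^sub>R w) - psi z) / (1 / ((1 + norm w) + real n))) \<partial>lborel)
      \<le> sigf K w * (\<integral>z. psi (z::'v) \<partial>lborel)" unfolding h_def .
qed

lemma steiner_single:
  fixes e :: "'v::euclidean_space"
  shows "(\<integral>z. inner e z * inner (Gf z) w \<partial>lborel) = inner e w * (\<integral>z. psi (z::'v) \<partial>lborel)"
proof -
  have lim: "(\<lambda>n. \<integral>z. sigf {e} z * ((psi (z - (1 / ((1 + norm w) + real n)) *\<^sub>R w) - psi z) / (1 / ((1 + norm w) + real n))) \<partial>lborel)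
     \<longlonglongrightarrow> (\<integral>z. sigf {e} z * inner (Gf z) w \<partial>lborel)"
    by (rule steiner_lim) (simp add: continuous_intros)
  have eq: "(\<integral>z. sigf {e} z * ((psi (z - (1 / ((1 + norm w) + real n)) *\<^sub>R w) - psi z) / (1 / ((1 + norm w) + real n))) \<partial>lborel)
      = inner e w * (\<integral>z. psi (z::'v) \<partial>lborel)" for n
  proof -
    define h where "h = 1 / ((1 + norm w) + real n)"
    have hpos: "0 < h" unfolding h_def by (simp add: add_pos_nonneg)
    have "(\<integral>z. sigf {e} z * ((psi (z - h *\<^sub>R w) - psi z) / h) \<partial>lborel)
       = (\<integral>z. (sigf {e} (z + h *\<^sub>R w) - sigf {e} z) / h * psi z \<partial>lborel)"
      by (rule quot_identity) (simp add: continuous_intros)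
    also have "\<dots> = (\<integral>z. inner e w * psi (z::'v) \<partial>lborel)"
      using hpos by (simp add: inner_add_right)
    also have "\<dots> = inner e w * (\<integral>z. psi (z::'v) \<partial>lborel)" by simp
    finally show ?thesis unfolding h_def .
  qed
  from lim show ?thesis unfolding eq by (simp add: LIMSEQ_const_iff)
qed

lemma stp_mem:
  fixes K :: "'v::euclidean_space set"
  assumes "compact K" "convex K" "K \<noteq> {}"
  shows "stp K \<in> K"
proof (rule ccontr)
  assume nin: "stp K \<notin> K"
  obtain R where R: "K \<subseteq> cball 0 R"
  proof -
    obtain b where "\<forall>x\<in>K. norm x \<le> b" using compact_imp_bounded[OF assms(1)] bounded_pos by blast
    then have "K \<subseteq> cball 0 b" by auto
    then show ?thesis using that by blast
  qed
  obtain a b where ab: "inner a (stp K) < b" "\<forall>x\<in>K. inner a x > b"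
    using separating_hyperplane_closed_point[OF assms(2) compact_imp_closed[OF assms(1)] nin] by blast
  have "sigf K (-a) \<le> -b"
    by (rule sigf_least[OF assms(3)]) (use ab(2) in \<open>force simp: inner_commute\<close>)
  moreover have "inner (stp K) (-a) \<le> sigf K (-a)"
  proof -
    have "inner (stp K) (-a) = (\<integral>z. sigf K z * inner (Gf z) (-a) \<partial>lborel) / (\<integral>z. psi (z::'v) \<partial>lborel)"
      by (rule stp_inner[OF assms(3) R])
    also have "\<dots> \<le> sigf K (-a)"
      using steiner_ineq[OF assms(3) R, of "-a"] pos_divide_le_eq[OF Psi_pos[where 'v='v]] by blast
    finally show ?thesis .
  qed
  ultimately show False using ab(1) by (simp add: inner_commute)
qed

lemma stp_single: "stp {e::'v::euclidean_space} = e"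
proof -
  have "inner (stp {e}) w = inner e w" for w
  proof -
    have "inner (stp {e}) w = (\<integral>z. sigf {e} z * inner (Gf z) w \<partial>lborel) / (\<integral>z. psi (z::'v) \<partial>lborel)"
      by (rule stp_inner[of _ "norm e"]) auto
    also have "\<dots> = inner e w" using steiner_single[of e w] Psi_pos[where 'v='v] by simp
    finally show ?thesis .
  qed
  then have "inner (stp {e} - e) (stp {e} - e) = 0" by (simp add: inner_diff_left)
  then show ?thesis by simp
qed

lemma stp_lip_ex:
  "\<exists>C::real. 0 \<le> C \<and> (\<forall>(K::'v::euclidean_space set) L R R' d. K \<noteq> {} \<longrightarrow> L \<noteq> {} \<longrightarrow>
     K \<subseteq> cball 0 R \<longrightarrow> L \<subseteq> cball 0 R' \<longrightarrow> hclose K L d \<longrightarrow> dist (stp K) (stp L) \<le> C * d)"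
proof -
  define P where "P = (\<integral>z. psi z \<partial>(lborel :: 'v measure))"
  define M where "M = (\<integral>z. norm z * norm (Gf z) \<partial>(lborel :: 'v measure))"
  have P: "0 < P" unfolding P_def by (rule Psi_pos)
  have intM: "integrable lborel (\<lambda>z::'v. norm z * norm (Gf z))"
    using integrable_norm[OF integrable_cont_Gf[of norm]] by (simp add: continuous_on_norm_id)
  have M: "0 \<le> M" unfolding M_def by (rule integral_nonneg_AE) auto
  show ?thesis
  proof (intro exI[of _ "M / P"] conjI allI impI)
    show "0 \<le> M / P" using M P by simp
    fix K L :: "'v set" and R R' d
    assume K: "K \<noteq> {}" and L: "L \<noteq> {}" and KR: "K \<subseteq> cball 0 R" and LR: "L \<subseteq> cball 0 R'"
      and hc: "hclose K L d"
    have iK: "integrable lborel (\<lambda>z. sigf K z *\<^sub>R Gf z)" by (rule integrable_cont_Gf[OF sigf_cont[OF K KR]])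
    have iL: "integrable lborel (\<lambda>z. sigf L z *\<^sub>R Gf z)" by (rule integrable_cont_Gf[OF sigf_cont[OF L LR]])
    have "stp K - stp L = (1 / P) *\<^sub>R ((\<integral>z. sigf K z *\<^sub>R Gf z \<partial>lborel) - (\<integral>z. sigf L z *\<^sub>R Gf z \<partial>lborel))"
      unfolding stp_def P_def by (simp add: scaleR_diff_right)
    also have "(\<integral>z. sigf K z *\<^sub>R Gf z \<partial>lborel) - (\<integral>z. sigf L z *\<^sub>R Gf z \<partial>lborel)
        = (\<integral>z. (sigf K z - sigf L z) *\<^sub>R Gf z \<partial>lborel)"
      using Bochner_Integration.integral_diff[OF iK iL] by (simp add: scaleR_diff_left)
    finally have eq: "norm (stp K - stp L) = (1 / P) * norm (\<integral>z. (sigf K z - sigf L z) *\<^sub>R Gf z \<partial>lborel)"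
      using P by simp
    have "norm (\<integral>z. (sigf K z - sigf L z) *\<^sub>R Gf z \<partial>lborel) \<le> (\<integral>z. d * (norm (z::'v) * norm (Gf z)) \<partial>lborel)"
    proof (rule Bochner_Integration.integral_norm_bound_integral)
      show "integrable lborel (\<lambda>z. (sigf K z - sigf L z) *\<^sub>R Gf z)"
        using Bochner_Integration.integrable_diff[OF iK iL] by (simp add: scaleR_diff_left)
      show "integrable lborel (\<lambda>z. d * (norm (z::'v) * norm (Gf z)))" by (intro integrable_mult_right intM)
      fix z :: 'v
      have "norm ((sigf K z - sigf L z) *\<^sub>R Gf z) = \<bar>sigf K z - sigf L z\<bar> * norm (Gf z)" by simp
      also have "\<dots> \<le> (d * norm z) * norm (Gf z)"
        by (intro mult_right_mono sigf_hclose[OF K L KR LR hc]) simp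
      finally show "norm ((sigf K z - sigf L z) *\<^sub>R Gf z) \<le> d * (norm z * norm (Gf z))" by simp
    qed
    also have "\<dots> = d * M" unfolding M_def by simp
    finally show "dist (stp K) (stp L) \<le> M / P * d"
      using eq P by (simp add: dist_norm divide_le_eq field_simps)
  qed
qed

definition Qs :: "'v::euclidean_space set \<Rightarrow> 'v \<Rightarrow> 'v set" where
  "Qs K y = K \<inter> cball y (2 * infdist y K)"

lemma Qs_props:
  assumes "compact K" "convex K" "K \<noteq> {}"
  shows "compact (Qs K y)" "convex (Qs K y)" "Qs K y \<noteq> {}" "Qs K y \<subseteq> K"
proof -
  show "compact (Qs K y)" unfolding Qs_def using assms by (simp add: compact_Int_closed)
  show "convex (Qs K y)" unfolding Qs_def using assms by (simp add: convex_Int)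
  obtain x where x: "x \<in> K" "infdist y K = dist y x"
    using infdist_attains_inf[OF compact_imp_closed[OF assms(1)] assms(3)] by blast
  then have "x \<in> Qs K y" unfolding Qs_def by (simp add: infdist_nonneg)
  then show "Qs K y \<noteq> {}" by auto
  show "Qs K y \<subseteq> K" unfolding Qs_def by auto
qed

lemma Qs_point: "e \<in> K \<Longrightarrow> Qs K e = {e}"
  unfolding Qs_def by auto

lemma infdist_hclose:
  fixes L :: "'v::euclidean_space set"
  assumes "closed L" "L \<noteq> {}" "\<forall>l\<in>L. \<exists>k\<in>K. dist k l \<le> d"
  shows "infdist y K \<le> infdist y L + d"
proof -
  obtain l where l: "l \<in> L" "infdist y L = dist y l"
    using infdist_attains_inf[OF assms(1,2)] by blast
  obtain k where k: "k \<in> K" "dist k l \<le> d" using assms(3) l(1) by blast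
  have "infdist y K \<le> dist y k" by (rule infdist_le[OF k(1)])
  also have "\<dots> \<le> dist y l + dist k l" by (metis dist_commute dist_triangle)
  finally show ?thesis using l k by linarith
qed

lemma Qs_hclose1:
  assumes K: "compact K" "convex K" "K \<noteq> {}" and L: "compact L" "convex L" "L \<noteq> {}"
    and hc: "hclose K L d" and yy: "dist y y' \<le> d"
  shows "\<forall>k\<in>Qs K y. \<exists>l\<in>Qs L y'. dist k l \<le> 19 * d"
proof
  fix k assume kQ: "k \<in> Qs K y"
  define dd where "dd = infdist y K"
  define dd' where "dd' = infdist y' L"
  have kK: "k \<in> K" and ky: "dist k y \<le> 2 * dd" using kQ unfolding Qs_def dd_def
    by (auto simp: dist_commute)
  have d0: "0 \<le> d" using yy zero_le_dist order_trans by blast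
  have "dd \<le> infdist y' K + dist y y'" unfolding dd_def by (rule infdist_triangle)
  also have "infdist y' K \<le> dd' + d" unfolding dd'_def
    by (rule infdist_hclose[OF compact_imp_closed[OF L(1)] L(3)]) (use hc in \<open>simp add: hclose_def\<close>)
  finally have ddd: "dd \<le> dd' + 2 * d" using yy by linarith
  obtain l0 where l0: "l0 \<in> L" "dist k l0 \<le> d" using hc kK unfolding hclose_def by blast
  define A where "A = dist l0 y'"
  have "A \<le> dist l0 k + dist k y + dist y y'" unfolding A_def
  proof -
    have "dist l0 y' \<le> dist l0 y + dist y y'" by (rule dist_triangle)
    moreover have "dist l0 y \<le> dist l0 k + dist k y" by (rule dist_triangle)
    ultimately show "dist l0 y' \<le> dist l0 k + dist k y + dist y y'" by linarith
  qed
  then have A6: "A \<le> 2 * dd' + 6 * d" using l0 ky ddd yy by (simp add: dist_commute)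
  have dd'0: "0 \<le> dd'" unfolding dd'_def by (rule infdist_nonneg)
  obtain p where p: "p \<in> L" "dd' = dist y' p"
    using infdist_attains_inf[OF compact_imp_closed[OF L(1)] L(3)] unfolding dd'_def by blast
  show "\<exists>l\<in>Qs L y'. dist k l \<le> 19 * d"
  proof (cases "A \<le> 2 * dd'")
    case True
    then have "l0 \<in> Qs L y'" using l0 unfolding Qs_def A_def dd'_def by (simp add: dist_commute)
    moreover have "dist k l0 \<le> 19 * d" using l0 d0 by linarith
    ultimately show ?thesis by blast
  next
    case False
    define th where "th = (A - 2 * dd') / (A - dd')"
    have Apos: "A - dd' > 0" using False dd'0 by linarith
    have th0: "0 \<le> th" and th1: "th \<le> 1" unfolding th_def using False Apos dd'0
      by (auto simp: divide_le_eq)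
    define l where "l = (1 - th) *\<^sub>R l0 + th *\<^sub>R p"
    have lL: "l \<in> L" unfolding l_def using L(2) l0(1) p(1) th0 th1
      by (simp add: convex_def)
    have "l - y' = (1 - th) *\<^sub>R (l0 - y') + th *\<^sub>R (p - y')"
      unfolding l_def by (simp add: algebra_simps)
    then have "norm (l - y') \<le> norm ((1 - th) *\<^sub>R (l0 - y')) + norm (th *\<^sub>R (p - y'))"
      by (metis norm_triangle_ineq)
    also have "\<dots> = (1 - th) * A + th * dd'"
      using th0 th1 p(2) unfolding A_def by (simp add: dist_norm norm_minus_commute)
    also have "(1 - th) * A + th * dd' = A - th * (A - dd')" by (simp add: algebra_simps)
    also have "\<dots> = 2 * dd'" unfolding th_def using Apos by simp
    finally have ly: "dist l y' \<le> 2 * dd'" by (simp add: dist_norm)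
    have "l - l0 = th *\<^sub>R (p - l0)" unfolding l_def by (simp add: algebra_simps)
    then have "dist l l0 = th * dist p l0" using th0 by (simp add: dist_norm)
    also have "dist p l0 \<le> A + dd'" unfolding A_def using p(2)
      by (metis dist_commute dist_triangle add.commute)
    then have "th * dist p l0 \<le> th * (A + dd')" using th0 by (rule mult_left_mono)
    also have "th * (A + dd') = (A - 2 * dd') * ((A + dd') / (A - dd'))" unfolding th_def by simp
    also have "\<dots> \<le> (A - 2 * dd') * 3"
    proof (rule mult_left_mono)
      show "(A + dd') / (A - dd') \<le> 3" using Apos False by (simp add: divide_le_eq)
      show "0 \<le> A - 2 * dd'" using False by simp
    qed
    finally have "dist l l0 \<le> 18 * d" using A6 by (smt (verit))
    moreover have "dist k l \<le> dist k l0 + dist l0 l" by (rule dist_triangle)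
    ultimately have "dist k l \<le> 19 * d" using l0(2) by (simp add: dist_commute)
    moreover have "l \<in> Qs L y'" using lL ly unfolding Qs_def dd'_def by (simp add: dist_commute)
    ultimately show ?thesis by blast
  qed
qed

lemma Qs_hclose:
  assumes K: "compact K" "convex K" "K \<noteq> {}" and L: "compact L" "convex L" "L \<noteq> {}"
    and hc: "hclose K L d" and yy: "dist y y' \<le> d"
  shows "hclose (Qs K y) (Qs L y') (19 * d)"
proof -
  have 1: "\<forall>k\<in>Qs K y. \<exists>l\<in>Qs L y'. dist k l \<le> 19 * d" by (rule Qs_hclose1[OF K L hc yy])
  have 2: "\<forall>l\<in>Qs L y'. \<exists>k\<in>Qs K y. dist l k \<le> 19 * d"
    by (rule Qs_hclose1[OF L K hclose_sym[OF hc]]) (use yy in \<open>simp add: dist_commute\<close>)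
  show ?thesis unfolding hclose_def using 1 2 by (auto simp: dist_commute)
qed

definition minor :: "('a::euclidean_space \<Rightarrow> real) \<Rightarrow> 'a \<Rightarrow> real \<Rightarrow> bool" where
  "minor g v r \<longleftrightarrow> (\<forall>p. inner v p - r \<le> g p)"

definition Eset :: "('a::euclidean_space \<Rightarrow> real) \<Rightarrow> real \<Rightarrow> ('a \<times> real) set" where
  "Eset g mu = {(v, r). minor g v r \<and> r \<le> mu}"

lemma sep_affine:
  fixes g :: "'a::euclidean_space \<Rightarrow> real"
  assumes g: "convex_on UNIV g" and T: "convex T" "T \<noteq> {}" and below: "\<And>p s. (p, s) \<in> T \<Longrightarrow> s \<le> g p"
  shows "\<exists>a b. (\<forall>p. inner a p + b \<le> g p) \<and> (\<forall>p s. (p, s) \<in> T \<longrightarrow> s \<le> inner a p + b)"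
proof -
  define S where "S = {(p, s). g p < s}"
  have cS: "convex S"
  proof (rule convexI)
    fix x y :: "'a \<times> real" and u v :: real
    assume x: "x \<in> S" and y: "y \<in> S" and u: "0 \<le> u" and v: "0 \<le> v" and uv: "u + v = 1"
    obtain p s where xps: "x = (p, s)" by (cases x)
    obtain q t where yqt: "y = (q, t)" by (cases y)
    have gp: "g p < s" and gq: "g q < t" using x y xps yqt S_def by auto
    have "g (u *\<^sub>R p + v *\<^sub>R q) \<le> u * g p + v * g q"
    proof -
      have ue: "u = 1 - v" using uv by simp
      show ?thesis using convex_onD[OF g, of v p q] u v uv unfolding ue by simp
    qed
    also have "\<dots> < u * s + v * t"
    proof (cases "u = 0")
      case True then show ?thesis using uv gq by simp
    next
      case False
      then have "u * g p < u * s" using u gp by simp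
      moreover have "v * g q \<le> v * t" using v gq by (simp add: mult_left_mono)
      ultimately show ?thesis by linarith
    qed
    finally show "u *\<^sub>R x + v *\<^sub>R y \<in> S" using xps yqt S_def by simp
  qed
  have "(0, g 0 + 1) \<in> S" unfolding S_def by simp
  then have nS: "S \<noteq> {}" by blast
  have dj: "S \<inter> T = {}" using below unfolding S_def by force
  obtain a b where ab: "a \<noteq> 0" "\<forall>x\<in>S. inner a x \<le> b" "\<forall>x\<in>T. inner a x \<ge> b"
    using separating_hyperplane_sets[OF cS T(1) nS T(2) dj] by blast
  obtain c \<gamma> where a: "a = (c, \<gamma>)" by (cases a)
  have Sb: "inner c p + \<gamma> * s \<le> b" if "g p < s" for p s
    using ab(2) that unfolding S_def a by auto
  have Tb: "b \<le> inner c p + \<gamma> * s" if "(p, s) \<in> T" for p s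
    using ab(3) that unfolding a by auto
  have gneg: "\<gamma> < 0"
  proof (rule ccontr)
    assume "\<not> \<gamma> < 0"
    then consider "\<gamma> > 0" | "\<gamma> = 0" by linarith
    then show False
    proof cases
      case 1
      define s where "s = max (g 0 + 1) ((\<bar>b\<bar> + 1) / \<gamma>)"
      have "g 0 < s" unfolding s_def by simp
      then have "\<gamma> * s \<le> b" using Sb[of 0 s] by simp
      moreover have "\<gamma> * ((\<bar>b\<bar> + 1) / \<gamma>) \<le> \<gamma> * s" unfolding s_def using 1 by (intro mult_left_mono) auto
      ultimately show False using 1 by simp
    next
      case 2
      then have c: "c \<noteq> 0" using ab(1) a by (auto simp: zero_prod_def)
      define p where "p = ((\<bar>b\<bar> + 1) / (norm c)\<^sup>2) *\<^sub>R c"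
      have "inner c p \<le> b" using Sb[of p "g p + 1"] 2 by simp
      moreover have "inner c p = \<bar>b\<bar> + 1" unfolding p_def using c
        by (simp add: power2_norm_eq_inner)
      ultimately show False by simp
    qed
  qed
  define a' where "a' = (- (1 / \<gamma>)) *\<^sub>R c"
  define b' where "b' = b / \<gamma>"
  have key: "(b - inner c p) / \<gamma> = inner a' p + b'" for p
    unfolding a'_def b'_def by (simp add: diff_divide_distrib)
  show ?thesis
  proof (intro exI conjI allI impI)
    fix p
    show "inner a' p + b' \<le> g p"
    proof (rule ccontr)
      assume "\<not> inner a' p + b' \<le> g p"
      then have lt: "g p < (b - inner c p) / \<gamma>" using key by simp
      define X where "X = (b - inner c p) / \<gamma>"
      define s where "s = (g p + X) / 2"
      have "g p < s" and sl: "s < (b - inner c p) / \<gamma>" using lt unfolding s_def X_def[symmetric] by simp_all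
      then have "inner c p + \<gamma> * s \<le> b" using Sb by simp
      then have "(b - inner c p) / \<gamma> \<le> s" using gneg by (simp add: divide_le_eq algebra_simps)
      with sl show False by simp
    qed
  next
    fix p s assume "(p, s) \<in> T"
    then have "b \<le> inner c p + \<gamma> * s" by (rule Tb)
    then have "s \<le> (b - inner c p) / \<gamma>" using gneg by (simp add: le_divide_eq algebra_simps)
    then show "s \<le> inner a' p + b'" using key by simp
  qed
qed

lemma subgrad:
  fixes g :: "'a::euclidean_space \<Rightarrow> real"
  assumes g: "convex_on UNIV g"
  shows "\<exists>a b. (\<forall>p. inner a p + b \<le> g p) \<and> inner a p0 + b = g p0"
proof -
  obtain a b where ab: "\<forall>p. inner a p + b \<le> g p" "\<forall>p s. (p, s) \<in> {(p0, g p0)} \<longrightarrow> s \<le> inner a p + b"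
    using sep_affine[OF g, of "{(p0, g p0)}"] by auto
  then have "g p0 \<le> inner a p0 + b" by auto
  with ab(1) have "inner a p0 + b = g p0" by (meson antisym)
  with ab(1) show ?thesis by blast
qed

definition good :: "('a::euclidean_space \<Rightarrow> real) \<Rightarrow> real \<Rightarrow> bool" where
  "good g mu \<longleftrightarrow> convex_on UNIV g \<and> (\<forall>v r. minor g v r \<longrightarrow> norm v \<le> mu \<and> - mu \<le> r \<and> minor g v mu)"

lemma E_attain:
  assumes "good g mu"
  shows "\<exists>v r. (v, r) \<in> Eset g mu \<and> inner v p - r = g p"
proof -
  obtain a b where ab: "\<forall>q. inner a q + b \<le> g q" "inner a p + b = g p"
    using subgrad[of g p] assms unfolding good_def by blast
  have m: "minor g a (-b)" unfolding minor_def using ab(1) by simp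
  then have "minor g a mu" using assms unfolding good_def by blast
  then have "inner a p - mu \<le> g p" unfolding minor_def by blast
  then have "-b \<le> mu" using ab(2) by simp
  then show ?thesis using m ab(2) unfolding Eset_def by (intro exI[of _ a] exI[of _ "-b"]) auto
qed

lemma E_minor: "(v, r) \<in> Eset g mu \<Longrightarrow> inner v p - r \<le> g p"
  unfolding Eset_def minor_def by auto

lemma E_bounds:
  assumes "good g mu" "(v, r) \<in> Eset g mu"
  shows "norm v \<le> mu" "-mu \<le> r" "r \<le> mu" "norm (v, r) \<le> 2 * mu"
proof -
  have m: "minor g v r" "r \<le> mu" using assms(2) unfolding Eset_def by auto
  then show "norm v \<le> mu" "-mu \<le> r" "r \<le> mu" using assms(1) unfolding good_def by auto
  then show "norm (v, r) \<le> 2 * mu" using norm_Pair_le[of v r] by simp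
qed

lemma E_nonempty: "good g mu \<Longrightarrow> Eset g mu \<noteq> {}"
  using E_attain[of g mu 0] by auto

lemma E_convex: "convex (Eset g mu)"
proof (rule convexI)
  fix x y :: "'a \<times> real" and u v :: real
  assume x: "x \<in> Eset g mu" and y: "y \<in> Eset g mu" and u: "0 \<le> u" and v: "0 \<le> v" and uv: "u + v = 1"
  obtain p s where xps: "x = (p, s)" by (cases x)
  obtain q t where yqt: "y = (q, t)" by (cases y)
  have "inner (u *\<^sub>R p + v *\<^sub>R q) z - (u * s + v * t) \<le> g z" for z
  proof -
    have "inner (u *\<^sub>R p + v *\<^sub>R q) z - (u * s + v * t) = u * (inner p z - s) + v * (inner q z - t)"
      by (simp add: inner_add_left algebra_simps)
    also have "\<dots> \<le> u * g z + v * g z"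
      using E_minor[of p s g mu z] E_minor[of q t g mu z] x y xps yqt u v
      by (intro add_mono mult_left_mono) auto
    also have "u * g z + v * g z = g z" using uv by (metis distrib_right mult_1)
    finally show ?thesis .
  qed
  moreover have "u * s + v * t \<le> mu"
  proof -
    have "s \<le> mu" "t \<le> mu" using x y xps yqt unfolding Eset_def by auto
    then have "u * s + v * t \<le> u * mu + v * mu" using u v by (intro add_mono mult_left_mono) auto
    moreover have "u * mu + v * mu = mu" using uv by (metis distrib_right mult_1)
    ultimately show ?thesis by linarith
  qed
  ultimately show "u *\<^sub>R x + v *\<^sub>R y \<in> Eset g mu" using xps yqt unfolding Eset_def minor_def by auto
qed

lemma E_closed: "closed (Eset g mu)"
proof -
  have "Eset g mu = (\<Inter>p. {e. inner (fst e) p - snd e \<le> g p}) \<inter> {e. snd e \<le> mu}"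
    unfolding Eset_def minor_def by auto
  moreover have "closed {e::'a \<times> real. inner (fst e) p - snd e \<le> g p}" for p
    by (intro closed_Collect_le continuous_intros)
  moreover have "closed {e::'a \<times> real. snd e \<le> mu}"
    by (intro closed_Collect_le continuous_intros)
  ultimately show ?thesis by (auto intro!: closed_Int closed_INT)
qed

lemma E_compact:
  assumes "good g mu" shows "compact (Eset g mu)"
proof -
  have "Eset g mu \<subseteq> cball 0 (2 * mu)" using E_bounds(4)[OF assms] by auto
  then have "bounded (Eset g mu)" by (rule bounded_subset[OF bounded_cball])
  then show ?thesis using E_closed by (simp add: compact_eq_bounded_closed)
qed

lemma E_hom:
  assumes "good g mu" "1 \<le> s"
  shows "\<bar>g (s *\<^sub>R w) - s * g w\<bar> \<le> (s - 1) * mu"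
proof -
  obtain v r where vr: "(v, r) \<in> Eset g mu" "inner v (s *\<^sub>R w) - r = g (s *\<^sub>R w)"
    using E_attain[OF assms(1)] by blast
  obtain v' r' where vr': "(v', r') \<in> Eset g mu" "inner v' w - r' = g w"
    using E_attain[OF assms(1)] by blast
  have 1: "g (s *\<^sub>R w) \<le> s * g w + (s - 1) * mu"
  proof -
    have "g (s *\<^sub>R w) = s * (inner v w - r) + (s - 1) * r" using vr(2) by (simp add: algebra_simps)
    also have "\<dots> \<le> s * g w + (s - 1) * mu"
      using E_minor[OF vr(1), of w] E_bounds(3)[OF assms(1) vr(1)] assms(2)
      by (intro add_mono mult_left_mono) auto
    finally show ?thesis .
  qed
  have 2: "s * g w - (s - 1) * mu \<le> g (s *\<^sub>R w)"
  proof -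
    have "s * g w + (s - 1) * r' = inner v' (s *\<^sub>R w) - r'" using vr'(2) by (simp add: algebra_simps)
    also have "\<dots> \<le> g (s *\<^sub>R w)" by (rule E_minor[OF vr'(1)])
    finally have "s * g w + (s - 1) * r' \<le> g (s *\<^sub>R w)" .
    moreover have "(s - 1) * (- mu) \<le> (s - 1) * r'"
      using E_bounds(2)[OF assms(1) vr'(1)] assms(2) by (intro mult_left_mono) auto
    ultimately show ?thesis by (simp add: algebra_simps)
  qed
  from 1 2 show ?thesis by (simp add: abs_le_iff algebra_simps)
qed

lemma E_approx1:
  assumes g: "good g mu" and g': "good g' mu'" and eta: "0 \<le> eta"
    and cl: "\<And>p. g p \<le> g' p + eta * (1 + norm p)"
    and e: "(v, r) \<in> Eset g mu"
  shows "\<exists>e'\<in>Eset g' mu'. dist (v, r) e' \<le> 2 * eta + \<bar>mu - mu'\<bar>"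
proof -
  define T where "T = {(p, s). s \<le> inner v p - r - eta - eta * norm p}"
  have cT: "convex T"
  proof (rule convexI)
    fix x y :: "'a \<times> real" and u w :: real
    assume x: "x \<in> T" and y: "y \<in> T" and u: "0 \<le> u" and w: "0 \<le> w" and uw: "u + w = 1"
    obtain p s where xps: "x = (p, s)" by (cases x)
    obtain q t where yqt: "y = (q, t)" by (cases y)
    have s: "s \<le> inner v p - r - eta - eta * norm p" and t: "t \<le> inner v q - r - eta - eta * norm q"
      using x y xps yqt T_def by auto
    have "norm (u *\<^sub>R p + w *\<^sub>R q) \<le> u * norm p + w * norm q"
      using norm_triangle_ineq[of "u *\<^sub>R p" "w *\<^sub>R q"] u w by simp
    then have n: "eta * norm (u *\<^sub>R p + w *\<^sub>R q) \<le> eta * (u * norm p + w * norm q)"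
      using eta by (rule mult_left_mono)
    have "u * s + w * t \<le> u * (inner v p - r - eta - eta * norm p) + w * (inner v q - r - eta - eta * norm q)"
      using s t u w by (intro add_mono mult_left_mono) auto
    also have "\<dots> = inner v (u *\<^sub>R p + w *\<^sub>R q) - (u + w) * r - (u + w) * eta - eta * (u * norm p + w * norm q)"
      by (simp add: inner_add_right algebra_simps)
    also have "\<dots> \<le> inner v (u *\<^sub>R p + w *\<^sub>R q) - r - eta - eta * norm (u *\<^sub>R p + w *\<^sub>R q)"
      using n uw by simp
    finally show "u *\<^sub>R x + w *\<^sub>R y \<in> T" using xps yqt T_def by simp
  qed
  have "(0, - r - eta) \<in> T" unfolding T_def by simp
  then have nT: "T \<noteq> {}" by blast
  have bl: "s \<le> g' p" if "(p, s) \<in> T" for p s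
  proof -
    have "s \<le> inner v p - r - eta * (1 + norm p)" using that T_def by (simp add: algebra_simps)
    also have "inner v p - r \<le> g p" by (rule E_minor[OF e])
    then have "inner v p - r - eta * (1 + norm p) \<le> g' p" using cl[of p] by simp
    finally show ?thesis .
  qed
  obtain a b where ab: "\<forall>p. inner a p + b \<le> g' p" "\<forall>p s. (p, s) \<in> T \<longrightarrow> s \<le> inner a p + b"
    using sep_affine[of g' T] g' cT nT bl unfolding good_def by blast
  have Tb: "inner v p - r - eta - eta * norm p \<le> inner a p + b" for p
    using ab(2) T_def by auto
  have b0: "- b \<le> r + eta" using Tb[of 0] by simp
  have va: "norm (v - a) \<le> eta"
  proof (rule ccontr)
    assume "\<not> norm (v - a) \<le> eta"
    then have gt: "norm (v - a) > eta" by simp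
    define d where "d = v - a"
    have dpos: "norm d * (norm d - eta) > 0" using gt eta unfolding d_def by (intro mult_pos_pos) auto
    define t where "t = (\<bar>b + r + eta\<bar> + 1) / (norm d * (norm d - eta))"
    have t0: "0 \<le> t" unfolding t_def using dpos by simp
    have "inner v (t *\<^sub>R d) - r - eta - eta * norm (t *\<^sub>R d) \<le> inner a (t *\<^sub>R d) + b" by (rule Tb)
    moreover have "eta * norm (t *\<^sub>R d) = eta * (t * norm d)" using t0 by simp
    moreover have "inner v (t *\<^sub>R d) - inner a (t *\<^sub>R d) = t * inner d d"
      unfolding d_def by (simp add: inner_diff_left right_diff_distrib[symmetric])
    ultimately have "t * (inner d d) - eta * (t * norm d) \<le> b + r + eta"
      by linarith
    then have "t * (norm d * (norm d - eta)) \<le> b + r + eta"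
      by (simp add: power2_norm_eq_inner[symmetric] power2_eq_square algebra_simps)
    moreover have "t * (norm d * (norm d - eta)) = \<bar>b + r + eta\<bar> + 1" unfolding t_def
      using dpos by (metis less_irrefl nonzero_eq_divide_eq)
    ultimately show False by simp
  qed
  define r' where "r' = min (r + eta) mu'"
  have m1: "minor g' a (r + eta)" unfolding minor_def using ab(1) b0
    by (smt (verit))
  then have m2: "minor g' a mu'" using g' unfolding good_def by blast
  have "minor g' a r'" unfolding r'_def min_def using m1 m2 by simp
  then have inE: "(a, r') \<in> Eset g' mu'" unfolding Eset_def r'_def by simp
  have rr: "r \<le> mu" using e unfolding Eset_def by simp
  have "\<bar>r - r'\<bar> \<le> eta + \<bar>mu - mu'\<bar>" unfolding r'_def using rr eta by (smt (verit) min_def)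
  then have "dist (v, r) (a, r') \<le> eta + (eta + \<bar>mu - mu'\<bar>)"
    using va norm_Pair_le[of "v - a" "r - r'"] by (simp add: dist_norm)
  then show ?thesis using inE by (intro bexI[of _ "(a, r')"]) auto
qed

lemma E_hclose:
  assumes g: "good g mu" and g': "good g' mu'" and eta: "0 \<le> eta"
    and cl: "\<And>p. \<bar>g p - g' p\<bar> \<le> eta * (1 + norm p)"
  shows "hclose (Eset g mu) (Eset g' mu') (2 * eta + \<bar>mu - mu'\<bar>)"
proof -
  have c1: "g p \<le> g' p + eta * (1 + norm p)" for p using cl[of p] by (simp add: abs_le_iff)
  have c2: "g' p \<le> g p + eta * (1 + norm p)" for p using cl[of p] by (simp add: abs_le_iff)
  have 1: "\<forall>k\<in>Eset g mu. \<exists>l\<in>Eset g' mu'. dist k l \<le> 2 * eta + \<bar>mu - mu'\<bar>"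
    using E_approx1[OF g g' eta c1] by fast
  have 2: "\<forall>l\<in>Eset g' mu'. \<exists>k\<in>Eset g mu. dist l k \<le> 2 * eta + \<bar>mu' - mu\<bar>"
    using E_approx1[OF g' g eta c2] by fast
  show ?thesis unfolding hclose_def using 1 2 by (auto simp: dist_commute abs_minus_commute)
qed

lemma dist3_12: "dist (t', x') (t, x) \<le> dist (t', x', a') (t, x, a)"
proof -
  have "dist (x', a') (x, a) \<ge> dist x' x" by (metis dist_fst_le fst_conv)
  then have "(dist x' x)\<^sup>2 \<le> (dist (x', a') (x, a))\<^sup>2" by (simp add: power_mono)
  then show ?thesis unfolding dist_Pair_Pair[of t' "(x', a')"] dist_Pair_Pair[of t' x']
    by (intro real_sqrt_le_mono) simp
qed

lemma dist3_3: "dist a' a \<le> dist (t', x', a') (t, x, a)"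
proof -
  have "dist a' a \<le> dist (x', a') (x, a)" by (metis dist_snd_le snd_conv)
  also have "\<dots> \<le> dist (t', x', a') (t, x, a)" by (metis dist_snd_le snd_conv)
  finally show ?thesis .
qed

lemma dist3_eq: "dist (t', x', p) (t, x, p) = dist (t', x') (t, x)"
  unfolding dist_Pair_Pair by simp

lemma GC:
  fixes H :: "real \<Rightarrow> 'a::euclidean_space \<Rightarrow> 'a \<Rightarrow> real" and lam :: "real \<Rightarrow> 'a \<Rightarrow> real"
  assumes Hc: "continuous_on ({0..T} \<times> UNIV \<times> UNIV) (\<lambda>(t, x, p). H t x p)"
    and lc: "continuous_on ({0..T} \<times> UNIV) (\<lambda>(t, x). lam t x)"
    and gd: "\<And>t x. t \<in> {0..T} \<Longrightarrow> good (H t x) (lam t x)"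
    and t: "t \<in> {0..T}" and e: "0 < e"
  shows "\<exists>d>0. \<forall>t'\<in>{0..T}. \<forall>x'. dist (t', x') (t, x) < d \<longrightarrow>
           (\<forall>p. \<bar>H t' x' p - H t x p\<bar> \<le> e * (1 + norm p)) \<and> \<bar>lam t' x' - lam t x\<bar> \<le> e"
proof -
  obtain d1 where d1: "d1 > 0" "\<And>t' x'. t' \<in> {0..T} \<Longrightarrow> dist (t', x') (t, x) < d1 \<Longrightarrow>
      dist (lam t' x') (lam t x) < min e 1"
  proof -
    have "(t, x) \<in> {0..T} \<times> (UNIV :: 'a set)" using t by simp
    moreover have "0 < min e 1" using e by simp
    ultimately obtain d where "d > 0" "\<And>u'. u' \<in> {0..T} \<times> UNIV \<Longrightarrow> dist u' (t, x) < d \<Longrightarrow>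
        dist ((\<lambda>(t, x). lam t x) u') ((\<lambda>(t, x). lam t x) (t, x)) < min e 1"
      using lc unfolding continuous_on_iff by metis
    then show ?thesis using that[of d] by auto
  qed
  define M where "M = lam t x + 1"
  define S where "S = (e + 2 * M) / e + 1"
  have M0: "0 \<le> lam t x"
  proof -
    obtain v r where "(v, r) \<in> Eset (H t x) (lam t x)" using E_attain[OF gd[OF t, of x]] by blast
    from E_bounds(2,3)[OF gd[OF t, of x] this] show ?thesis by linarith
  qed
  have S1: "1 < S" unfolding S_def using e M0 M_def by (simp add: add_pos_nonneg)
  have eS: "e + 2 * M \<le> e * S"
  proof -
    have "e * ((e + 2 * M) / e) = e + 2 * M" using e by simp
    then have "e * S = (e + 2 * M) + e" unfolding S_def by (simp add: distrib_left)
    then show ?thesis using e by linarith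
  qed
  define C where "C = ({0..T} \<inter> cball t 1) \<times> cball x 1 \<times> cball (0::'a) S"
  have cC: "compact C" unfolding C_def
    by (intro compact_Times compact_Int_closed) auto
  have HC: "continuous_on C (\<lambda>(t, x, p). H t x p)"
    by (rule continuous_on_subset[OF Hc]) (auto simp: C_def)
  obtain d2 where d2: "d2 > 0" "\<And>u u'. u \<in> C \<Longrightarrow> u' \<in> C \<Longrightarrow> dist u' u < d2 \<Longrightarrow>
      dist ((\<lambda>(t, x, p). H t x p) u') ((\<lambda>(t, x, p). H t x p) u) < e"
    using compact_uniformly_continuous[OF HC cC] e unfolding uniformly_continuous_on_def by metis
  show ?thesis
  proof (intro exI[of _ "min (min d1 d2) 1"] conjI allI ballI impI)
    show "0 < min (min d1 d2) 1" using d1 d2 by simp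
    fix t' x' assume t': "t' \<in> {0..T}" and dd: "dist (t', x') (t, x) < min (min d1 d2) 1"
    have ll: "\<bar>lam t' x' - lam t x\<bar> < min e 1" using d1(2)[OF t'] dd by (simp add: dist_real_def)
    then show "\<bar>lam t' x' - lam t x\<bar> \<le> e" by simp
    have lM: "lam t' x' \<le> M" using ll unfolding M_def by (simp add: abs_less_iff)
    have lM2: "lam t x \<le> M" unfolding M_def by simp
    have tt: "dist t' t \<le> 1" and xx: "dist x' x \<le> 1"
      using dd dist_fst_le[of "(t', x')" "(t, x)"] dist_snd_le[of "(t', x')" "(t, x)"] by auto
    have near: "\<bar>H t' x' p - H t x p\<bar> < e" if "norm p \<le> S" for p
    proof -
      have "(t', x', p) \<in> C" "(t, x, p) \<in> C" using t' t tt xx that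
        by (auto simp: C_def dist_commute)
      moreover have "dist (t', x', p) (t, x, p) < d2" using dd unfolding dist3_eq by simp
      ultimately show ?thesis using d2(2)[of "(t, x, p)" "(t', x', p)"] by (simp add: dist_real_def)
    qed
    fix p
    show "\<bar>H t' x' p - H t x p\<bar> \<le> e * (1 + norm p)"
    proof (cases "norm p \<le> S")
      case True
      then show ?thesis using near[OF True] e by (smt (verit) mult_le_cancel_left1 norm_ge_zero)
    next
      case False
      define s where "s = norm p / S"
      define w where "w = (S / norm p) *\<^sub>R p"
      have np: "norm p > S" using False by simp
      have s1: "1 \<le> s" unfolding s_def using np S1 by simp
      have pw: "s *\<^sub>R w = p" unfolding s_def w_def using np S1 by simp
      have np0: "0 < norm p" using np S1 by linarith
      have nw: "norm w = S" unfolding w_def using S1 np0 by (simp add: abs_of_pos)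
      have hw: "\<bar>H t' x' w - H t x w\<bar> < e" using near nw by simp
      have h1: "\<bar>H t' x' (s *\<^sub>R w) - s * H t' x' w\<bar> \<le> (s - 1) * lam t' x'"
        by (rule E_hom[OF gd[OF t'] s1])
      have h2: "\<bar>H t x (s *\<^sub>R w) - s * H t x w\<bar> \<le> (s - 1) * lam t x"
        by (rule E_hom[OF gd[OF t] s1])
      have "(s - 1) * lam t' x' \<le> (s - 1) * M" using lM s1 by (intro mult_left_mono) auto
      moreover have "(s - 1) * lam t x \<le> (s - 1) * M" using lM2 s1 by (intro mult_left_mono) auto
      moreover have "\<bar>s * H t' x' w - s * H t x w\<bar> \<le> s * e"
        using hw s1 by (simp add: abs_mult right_diff_distrib[symmetric])
      ultimately have "\<bar>H t' x' (s *\<^sub>R w) - H t x (s *\<^sub>R w)\<bar> \<le> s * e + 2 * ((s - 1) * M)"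
        using h1 h2 by linarith
      also have "\<dots> \<le> s * (e + 2 * M)" using s1 M0 M_def by (simp add: algebra_simps)
      also have "\<dots> \<le> s * (e * S)" using eS s1 by (intro mult_left_mono) auto
      also have "s * (e * S) = e * norm p" unfolding s_def using S1 by simp
      also have "\<dots> \<le> e * (1 + norm p)" using e by simp
      finally show ?thesis using pw by simp
    qed
  qed
qed

lemma good_from:
  fixes H :: "real \<Rightarrow> 'a::euclidean_space \<Rightarrow> 'a \<Rightarrow> real"
  assumes cv: "convex_on UNIV (H t x)"
    and dm: "\<forall>v\<in>domHstar H t x. norm v \<le> lam t x \<and> \<bar>real_of_ereal (Hstar H t x v)\<bar> \<le> lam t x"
  shows "good (H t x) (lam t x)"
  unfolding good_def
proof (rule conjI[OF cv], intro allI impI)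
  fix v r assume m: "minor (H t x) v r"
  have le: "Hstar H t x v \<le> ereal r" unfolding Hstar_def
  proof (rule SUP_least)
    fix p :: 'a
    have "inner v p - r \<le> H t x p" using m unfolding minor_def by blast
    then show "ereal (inner v p - H t x p) \<le> ereal r" by simp
  qed
  have ge: "ereal (inner v 0 - H t x 0) \<le> Hstar H t x v" unfolding Hstar_def
    by (rule SUP_upper) simp
  have fin1: "Hstar H t x v \<noteq> \<infinity>" using le by auto
  have fin2: "Hstar H t x v \<noteq> -\<infinity>" using ge by auto
  have vd: "v \<in> domHstar H t x" unfolding domHstar_def using fin1 fin2 by simp
  define hs where "hs = real_of_ereal (Hstar H t x v)"
  have hse: "Hstar H t x v = ereal hs" unfolding hs_def using fin1 fin2 by (cases "Hstar H t x v") auto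
  have b: "norm v \<le> lam t x" "\<bar>hs\<bar> \<le> lam t x" using dm vd unfolding hs_def by auto
  have "hs \<le> r" using le hse by simp
  then have "- lam t x \<le> r" using b by linarith
  moreover have "minor (H t x) v (lam t x)" unfolding minor_def
  proof
    fix p
    have "ereal (inner v p - H t x p) \<le> Hstar H t x v" unfolding Hstar_def by (rule SUP_upper) simp
    then have "inner v p - H t x p \<le> hs" using hse by simp
    then show "inner v p - lam t x \<le> H t x p" using b by linarith
  qed
  ultimately show "norm v \<le> lam t x \<and> - lam t x \<le> r \<and> minor (H t x) v (lam t x)" using b by blast
qed

lemma abs2: "\<bar>2 * a - 2 * b\<bar> = 2 * \<bar>a - b\<bar>" for a b :: real
  by (simp add: abs_if)

theorem theorem3p1:
  fixes T :: real and H :: "real \<Rightarrow> 'a::euclidean_space \<Rightarrow> 'a \<Rightarrow> real"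
  assumes "condA T H"
  shows "\<exists>(f :: real \<Rightarrow> 'a \<Rightarrow> 'a \<times> real \<Rightarrow> 'a) (l :: real \<Rightarrow> 'a \<Rightarrow> 'a \<times> real \<Rightarrow> real).
    (\<forall>t\<in>{0..T}. \<forall>x p. ereal (H t x p) = (SUP a\<in>cball 0 1. ereal (inner p (f t x a) - l t x a))) \<and>
    continuous_on ({0..T} \<times> UNIV \<times> cball 0 1) (\<lambda>(t, x, a). f t x a) \<and>
    continuous_on ({0..T} \<times> UNIV \<times> cball 0 1) (\<lambda>(t, x, a). l t x a) \<and>
    (\<forall>R\<ge>0. \<exists>K. int_nonneg T K \<and> (AE t in lebesgue. t \<in> {0..T} \<longrightarrow>
       (\<forall>x\<in>cball 0 R. \<forall>y\<in>cball 0 R. \<forall>a\<in>cball 0 1.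
          norm (f t x a - f t y a) + \<bar>l t x a - l t y a\<bar> \<le> K t * norm (x - y)))) \<and>
    (\<exists>C. int_nonneg T C \<and> (AE t in lebesgue. t \<in> {0..T} \<longrightarrow>
       (\<forall>x. \<forall>a\<in>cball 0 1. norm (f t x a) + \<bar>l t x a\<bar> \<le> C t * (1 + norm x))))"
proof -
  have h1: "H1 T H" and h2: "H2 T H" and h5: "H5 T H" using assms unfolding condA_def by auto
  obtain lam :: "real \<Rightarrow> 'a \<Rightarrow> real" where
    lc: "continuous_on ({0..T} \<times> UNIV) (\<lambda>(t, x). lam t x)" and
    l0: "\<forall>t\<in>{0..T}. \<forall>x. lam t x \<ge> 0" and
    ld: "\<forall>t\<in>{0..T}. \<forall>x. \<forall>v\<in>domHstar H t x. norm v \<le> lam t x \<and> \<bar>real_of_ereal (Hstar H t x v)\<bar> \<le> lam t x" and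
    lL: "\<forall>R\<ge>0. \<exists>zeta. int_nonneg T zeta \<and> (AE t in lebesgue. t \<in> {0..T} \<longrightarrow>
          (\<forall>x\<in>cball 0 R. \<forall>y\<in>cball 0 R. \<bar>lam t x - lam t y\<bar> \<le> zeta t * norm (x - y)))" and
    lG: "\<exists>theta. int_nonneg T theta \<and> (AE t in lebesgue. t \<in> {0..T} \<longrightarrow>
          (\<forall>x. lam t x \<le> theta t * (1 + norm x)))"
    using assms unfolding condA_def by blast
  have Hc: "continuous_on ({0..T} \<times> UNIV \<times> UNIV) (\<lambda>(t, x, p). H t x p)" using h1 unfolding H1_def .
  have gd: "good (H t x) (lam t x)" if "t \<in> {0..T}" for t x
    using h2 ld that unfolding H2_def by (intro good_from) auto
  obtain Cs :: real where Cs0: "0 \<le> Cs" and Cs: "\<And>(K::('a \<times> real) set) L R R' d. K \<noteq> {} \<Longrightarrow> L \<noteq> {} \<Longrightarrow>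
      K \<subseteq> cball 0 R \<Longrightarrow> L \<subseteq> cball 0 R' \<Longrightarrow> hclose K L d \<Longrightarrow> dist (stp K) (stp L) \<le> Cs * d"
    using stp_lip_ex[where 'v="'a \<times> real"] by blast
  define E where "E = (\<lambda>t x. Eset (H t x) (lam t x))"
  define F where "F = (\<lambda>t x (a::'a \<times> real). stp (Qs (E t x) ((2 * lam t x) *\<^sub>R a)))"
  define f where "f = (\<lambda>t x a. fst (F t x a))"
  define l where "l = (\<lambda>t x a. snd (F t x a))"
  have Ep: "compact (E t x)" "convex (E t x)" "E t x \<noteq> {}" if "t \<in> {0..T}" for t x
    using E_compact[OF gd[OF that]] E_convex E_nonempty[OF gd[OF that]] unfolding E_def by auto
  have Eb: "E t x \<subseteq> cball 0 (2 * lam t x)" if "t \<in> {0..T}" for t x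
  proof (rule subsetI)
    fix e assume e: "e \<in> E t x"
    obtain v r where vr: "e = (v, r)" by (cases e)
    show "e \<in> cball 0 (2 * lam t x)" using E_bounds(4)[OF gd[OF that], of v r] e vr unfolding E_def by simp
  qed
  have Qp: "compact (Qs (E t x) y)" "convex (Qs (E t x) y)" "Qs (E t x) y \<noteq> {}"
    "Qs (E t x) y \<subseteq> cball 0 (2 * lam t x)" if "t \<in> {0..T}" for t x y
  proof -
    show "compact (Qs (E t x) y)" "convex (Qs (E t x) y)" "Qs (E t x) y \<noteq> {}"
      using Qs_props[OF Ep[OF that]] by auto
    show "Qs (E t x) y \<subseteq> cball 0 (2 * lam t x)"
      using Qs_props(4)[OF Ep[OF that]] Eb[OF that] by (rule subset_trans)
  qed
  have FE: "F t x a \<in> E t x" if "t \<in> {0..T}" for t x a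
    unfolding F_def using stp_mem[OF Qp(1-3)[OF that]] Qs_props(4)[OF Ep[OF that]] by blast
  have Fb: "norm (f t x a) + \<bar>l t x a\<bar> \<le> 2 * lam t x" if "t \<in> {0..T}" for t x a
  proof -
    obtain v r where vr: "F t x a = (v, r)" by (cases "F t x a")
    have "(v, r) \<in> Eset (H t x) (lam t x)" using FE[OF that, of x a] vr unfolding E_def by simp
    from E_bounds(1-3)[OF gd[OF that] this] show ?thesis unfolding f_def l_def vr by simp
  qed
  have Fhc: "dist (F t x a) (F t' x' a') \<le> Cs * (19 * d)"
    if "t \<in> {0..T}" "t' \<in> {0..T}" "hclose (E t x) (E t' x') d"
       "dist ((2 * lam t x) *\<^sub>R a) ((2 * lam t' x') *\<^sub>R a') \<le> d" for t t' x x' a a' d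
  proof -
    have "hclose (Qs (E t x) ((2 * lam t x) *\<^sub>R a)) (Qs (E t' x') ((2 * lam t' x') *\<^sub>R a')) (19 * d)"
      by (rule Qs_hclose[OF Ep[OF that(1)] Ep[OF that(2)] that(3,4)])
    then show ?thesis unfolding F_def
      by (rule Cs[OF Qp(3)[OF that(1)] Qp(3)[OF that(2)] Qp(4)[OF that(1)] Qp(4)[OF that(2)]])
  qed
  have G1: "\<forall>t\<in>{0..T}. \<forall>x p. ereal (H t x p) = (SUP a\<in>cball 0 1. ereal (inner p (f t x a) - l t x a))"
  proof (intro ballI allI)
    fix t x p assume t: "t \<in> {0..T}"
    have up: "inner p (f t x a) - l t x a \<le> H t x p" for a
    proof -
      obtain v r where vr: "F t x a = (v, r)" by (cases "F t x a")
      have "(v, r) \<in> Eset (H t x) (lam t x)" using FE[OF t, of x a] vr unfolding E_def by simp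
      from E_minor[OF this, of p] show ?thesis unfolding f_def l_def vr by (simp add: inner_commute)
    qed
    obtain v r where vr: "(v, r) \<in> Eset (H t x) (lam t x)" "inner v p - r = H t x p"
      using E_attain[OF gd[OF t]] by blast
    define e where "e = (v, r)"
    define a0 where "a0 = (if lam t x = 0 then 0 else (1 / (2 * lam t x)) *\<^sub>R e)"
    have nvr: "norm e \<le> 2 * lam t x" unfolding e_def by (rule E_bounds(4)[OF gd[OF t] vr(1)])
    have lx0: "0 \<le> lam t x" using l0 t by auto
    have a0b: "a0 \<in> cball 0 1"
    proof (cases "lam t x = 0")
      case False
      then have lp: "0 < lam t x" using lx0 by simp
      have "norm a0 = norm e / (2 * lam t x)" unfolding a0_def using False lp by simp
      also have "\<dots> \<le> 1" using nvr lp by simp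
      finally show ?thesis by simp
    qed (simp add: a0_def)
    have ya: "(2 * lam t x) *\<^sub>R a0 = (v, r)"
    proof (cases "lam t x = 0")
      case True
      then have "norm e \<le> 0" using nvr by simp
      then have "e = 0" by simp
      then show ?thesis using True unfolding a0_def e_def by simp
    qed (simp add: a0_def e_def)
    have "(v, r) \<in> E t x" using vr(1) unfolding E_def .
    then have Fa0: "F t x a0 = (v, r)" unfolding F_def ya by (simp add: Qs_point stp_single)
    show "ereal (H t x p) = (SUP a\<in>cball 0 1. ereal (inner p (f t x a) - l t x a))"
    proof (rule antisym)
      have "ereal (H t x p) = ereal (inner p (f t x a0) - l t x a0)"
        unfolding f_def l_def Fa0 using vr(2) by (simp add: inner_commute)
      also have "\<dots> \<le> (SUP a\<in>cball 0 1. ereal (inner p (f t x a) - l t x a))" by (rule SUP_upper[OF a0b])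
      finally show "ereal (H t x p) \<le> (SUP a\<in>cball 0 1. ereal (inner p (f t x a) - l t x a))" .
      show "(SUP a\<in>cball 0 1. ereal (inner p (f t x a) - l t x a)) \<le> ereal (H t x p)"
        by (rule SUP_least) (use up in simp)
    qed
  qed
  have contF: "continuous_on ({0..T} \<times> UNIV \<times> cball 0 1) (\<lambda>(t, x, a). F t x a)"
    unfolding continuous_on_iff
  proof (intro ballI allI impI)
    fix z :: "real \<times> 'a \<times> 'a \<times> real" and e :: real
    assume z: "z \<in> {0..T} \<times> UNIV \<times> cball 0 1" and e: "0 < e"
    obtain t x a where zz: "z = (t, x, a)" by (cases z) auto
    have t: "t \<in> {0..T}" using z zz by auto
    define ep where "ep = e / (60 * (Cs + 1))"
    have ep: "0 < ep" unfolding ep_def using e Cs0 by simp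
    obtain d1 where d1: "d1 > 0" "\<forall>t'\<in>{0..T}. \<forall>x'. dist (t', x') (t, x) < d1 \<longrightarrow>
        (\<forall>p. \<bar>H t' x' p - H t x p\<bar> \<le> ep * (1 + norm p)) \<and> \<bar>lam t' x' - lam t x\<bar> \<le> ep"
      using GC[OF Hc lc gd t ep] by blast
    have lx0: "0 \<le> lam t x" using l0 t by auto
    define d where "d = min d1 (ep / (2 * lam t x + 1))"
    show "\<exists>d>0. \<forall>z'\<in>{0..T} \<times> UNIV \<times> cball 0 1. dist z' z < d \<longrightarrow>
        dist ((\<lambda>(t, x, a). F t x a) z') ((\<lambda>(t, x, a). F t x a) z) < e"
    proof (intro exI[of _ d] conjI ballI impI)
      show "0 < d" unfolding d_def using d1 ep lx0 by simp
      fix z' assume z': "z' \<in> {0..T} \<times> UNIV \<times> cball (0::'a \<times> real) 1" and dz: "dist z' z < d"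
      obtain t' x' a' where zz': "z' = (t', x', a')" by (cases z') auto
      have t': "t' \<in> {0..T}" and a': "a' \<in> cball 0 1" using z' zz' by auto
      have dtx: "dist (t', x') (t, x) < d1"
        using dist3_12[where t'=t' and x'=x' and a'=a' and t=t and x=x and a=a] dz zz zz' unfolding d_def by simp
      have da: "dist a' a < ep / (2 * lam t x + 1)"
        using dist3_3[where t'=t' and x'=x' and a'=a' and t=t and x=x and a=a] dz zz zz' unfolding d_def by simp
      have cl: "\<bar>H t' x' p - H t x p\<bar> \<le> ep * (1 + norm p)" for p using d1(2) t' dtx by blast
      have cll: "\<bar>lam t' x' - lam t x\<bar> \<le> ep" using d1(2) t' dtx by blast
      have hc: "hclose (E t' x') (E t x) (2 * ep + \<bar>lam t' x' - lam t x\<bar>)"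
        unfolding E_def by (rule E_hclose[OF gd[OF t'] gd[OF t]]) (use ep cl in auto)
      then have hc3: "hclose (E t' x') (E t x) (3 * ep)" by (rule hclose_mono) (use cll in simp)
      have dy: "dist ((2 * lam t' x') *\<^sub>R a') ((2 * lam t x) *\<^sub>R a) \<le> 3 * ep"
      proof -
        have eq: "(2 * lam t' x') *\<^sub>R a' - (2 * lam t x) *\<^sub>R a
            = (2 * (lam t' x' - lam t x)) *\<^sub>R a' + (2 * lam t x) *\<^sub>R (a' - a)"
          by (simp add: algebra_simps)
        have "norm ((2 * (lam t' x' - lam t x)) *\<^sub>R a') \<le> 2 * ep"
        proof -
          have "norm ((2 * (lam t' x' - lam t x)) *\<^sub>R a') = 2 * \<bar>lam t' x' - lam t x\<bar> * norm a'" by (simp add: abs2)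
          also have "\<dots> \<le> 2 * ep * 1" using cll a' by (intro mult_mono) auto
          finally show ?thesis by simp
        qed
        moreover have "norm ((2 * lam t x) *\<^sub>R (a' - a)) \<le> ep"
        proof -
          have "norm ((2 * lam t x) *\<^sub>R (a' - a)) = (2 * lam t x) * dist a' a" using lx0 by (simp add: dist_norm)
          also have "\<dots> \<le> (2 * lam t x) * (ep / (2 * lam t x + 1))" using da lx0 by (intro mult_left_mono) auto
          also have "\<dots> \<le> ep"
          proof -
            have "(2 * lam t x) / (2 * lam t x + 1) \<le> 1" using lx0 by simp
            then have "(2 * lam t x) / (2 * lam t x + 1) * ep \<le> 1 * ep" using ep by (intro mult_right_mono) auto
            then show ?thesis by simp
          qed
          finally show ?thesis .
        qed
        ultimately have "norm ((2 * lam t' x') *\<^sub>R a' - (2 * lam t x) *\<^sub>R a) \<le> 3 * ep"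
          unfolding eq by (smt (verit) norm_triangle_ineq)
        then show ?thesis by (simp add: dist_norm)
      qed
      have "dist (F t' x' a') (F t x a) \<le> Cs * (19 * (3 * ep))" by (rule Fhc[OF t' t hc3 dy])
      also have "\<dots> < e"
      proof -
        have "Cs * (19 * (3 * ep)) = (57 * Cs / (60 * (Cs + 1))) * e" unfolding ep_def by simp
        also have "57 * Cs / (60 * (Cs + 1)) < 1" using Cs0 by simp
        then have "(57 * Cs / (60 * (Cs + 1))) * e < 1 * e" using e by (intro mult_strict_right_mono) auto
        finally show ?thesis by simp
      qed
      finally show "dist ((\<lambda>(t, x, a). F t x a) z') ((\<lambda>(t, x, a). F t x a) z) < e" using zz zz' by simp
    qed
  qed
  have contf: "continuous_on ({0..T} \<times> UNIV \<times> cball 0 1) (\<lambda>(t, x, a). f t x a)"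
  proof -
    have "(\<lambda>(t, x, a). f t x a) = (\<lambda>z. fst ((\<lambda>(t, x, a). F t x a) z))"
      by (auto simp: f_def fun_eq_iff split: prod.splits)
    then show ?thesis using continuous_on_fst[OF contF] by simp
  qed
  have contl: "continuous_on ({0..T} \<times> UNIV \<times> cball 0 1) (\<lambda>(t, x, a). l t x a)"
  proof -
    have "(\<lambda>(t, x, a). l t x a) = (\<lambda>z. snd ((\<lambda>(t, x, a). F t x a) z))"
      by (auto simp: l_def fun_eq_iff split: prod.splits)
    then show ?thesis using continuous_on_snd[OF contF] by simp
  qed
  have G4: "\<forall>R\<ge>0. \<exists>K. int_nonneg T K \<and> (AE t in lebesgue. t \<in> {0..T} \<longrightarrow>
       (\<forall>x\<in>cball 0 R. \<forall>y\<in>cball 0 R. \<forall>a\<in>cball 0 1.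
          norm (f t x a - f t y a) + \<bar>l t x a - l t y a\<bar> \<le> K t * norm (x - y)))"
  proof (intro allI impI)
    fix R :: real assume R: "0 \<le> R"
    obtain k where k: "int_nonneg T k" and kAE: "AE t in lebesgue. t \<in> {0..T} \<longrightarrow>
        (\<forall>x\<in>cball 0 R. \<forall>y\<in>cball 0 R. \<forall>p. \<bar>H t x p - H t y p\<bar> \<le> k t * (1 + norm p) * norm (x - y))"
      using h5 R unfolding H5_def by blast
    obtain zeta where zt: "int_nonneg T zeta" and zAE: "AE t in lebesgue. t \<in> {0..T} \<longrightarrow>
        (\<forall>x\<in>cball 0 R. \<forall>y\<in>cball 0 R. \<bar>lam t x - lam t y\<bar> \<le> zeta t * norm (x - y))"
      using lL R by blast
    define K where "K = (\<lambda>t. 76 * Cs * (k t + zeta t))"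
    show "\<exists>K. int_nonneg T K \<and> (AE t in lebesgue. t \<in> {0..T} \<longrightarrow>
       (\<forall>x\<in>cball 0 R. \<forall>y\<in>cball 0 R. \<forall>a\<in>cball 0 1.
          norm (f t x a - f t y a) + \<bar>l t x a - l t y a\<bar> \<le> K t * norm (x - y)))"
    proof (intro exI[of _ K] conjI)
      have "(\<lambda>t. (76 * Cs) *\<^sub>R (k t + zeta t)) integrable_on {0..T}"
        using k zt unfolding int_nonneg_def by (intro integrable_cmul integrable_add) auto
      moreover have "\<forall>t\<in>{0..T}. 0 \<le> K t" using k zt Cs0 unfolding int_nonneg_def K_def by auto
      ultimately show "int_nonneg T K" unfolding int_nonneg_def K_def by simp
      show "AE t in lebesgue. t \<in> {0..T} \<longrightarrow>
       (\<forall>x\<in>cball 0 R. \<forall>y\<in>cball 0 R. \<forall>a\<in>cball 0 1.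
          norm (f t x a - f t y a) + \<bar>l t x a - l t y a\<bar> \<le> K t * norm (x - y))"
        using kAE zAE
      proof eventually_elim
        case (elim t)
        show ?case
        proof (intro impI ballI)
          assume t: "t \<in> {0..T}"
          fix x y a assume x: "x \<in> cball (0::'a) R" and y: "y \<in> cball (0::'a) R" and a: "a \<in> cball (0::'a \<times> real) 1"
          have kt: "0 \<le> k t" "0 \<le> zeta t" using k zt t unfolding int_nonneg_def by auto
          have Hxy: "\<bar>H t x p - H t y p\<bar> \<le> (k t * norm (x - y)) * (1 + norm p)" for p
            using elim(1) t x y by (simp add: ac_simps)
          have lxy: "\<bar>lam t x - lam t y\<bar> \<le> zeta t * norm (x - y)" using elim(2) t x y by blast
          define dl where "dl = (2 * k t + 2 * zeta t) * norm (x - y)"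
          have hc: "hclose (E t x) (E t y) (2 * (k t * norm (x - y)) + \<bar>lam t x - lam t y\<bar>)"
            unfolding E_def by (rule E_hclose[OF gd[OF t] gd[OF t]]) (use kt Hxy in auto)
          then have hcd: "hclose (E t x) (E t y) dl"
            by (rule hclose_mono) (use lxy kt in \<open>simp add: dl_def algebra_simps\<close>)
          have "dist ((2 * lam t x) *\<^sub>R a) ((2 * lam t y) *\<^sub>R a) = 2 * \<bar>lam t x - lam t y\<bar> * norm a"
            by (simp add: dist_norm scaleR_diff_left[symmetric] abs2)
          also have "\<dots> \<le> 2 * (zeta t * norm (x - y)) * 1" using lxy a by (intro mult_mono) auto
          also have "\<dots> \<le> dl" unfolding dl_def using kt by (simp add: algebra_simps)
          finally have "dist (F t x a) (F t y a) \<le> Cs * (19 * dl)" by (rule Fhc[OF t t hcd])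
          moreover have "norm (f t x a - f t y a) + \<bar>l t x a - l t y a\<bar> \<le> 2 * dist (F t x a) (F t y a)"
          proof -
            define u where "u = F t x a - F t y a"
            have "norm (f t x a - f t y a) = norm (fst u)" unfolding u_def f_def by simp
            also have "\<dots> \<le> norm u" using norm_fst_le[of "fst u" "snd u"] by simp
            finally have 1: "norm (f t x a - f t y a) \<le> norm u" .
            have "\<bar>l t x a - l t y a\<bar> = norm (snd u)" unfolding u_def l_def by simp
            also have "\<dots> \<le> norm u" using norm_snd_le[of "snd u" "fst u"] by simp
            finally have 2: "\<bar>l t x a - l t y a\<bar> \<le> norm u" .
            from 1 2 show ?thesis unfolding u_def by (simp add: dist_norm)
          qed
          ultimately have "norm (f t x a - f t y a) + \<bar>l t x a - l t y a\<bar> \<le> 2 * (Cs * (19 * dl))" by linarith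
          also have "2 * (Cs * (19 * dl)) = K t * norm (x - y)" unfolding K_def dl_def by (simp add: algebra_simps)
          finally show "norm (f t x a - f t y a) + \<bar>l t x a - l t y a\<bar> \<le> K t * norm (x - y)" .
        qed
      qed
    qed
  qed
  have G5: "\<exists>C. int_nonneg T C \<and> (AE t in lebesgue. t \<in> {0..T} \<longrightarrow>
       (\<forall>x. \<forall>a\<in>cball 0 1. norm (f t x a) + \<bar>l t x a\<bar> \<le> C t * (1 + norm x)))"
  proof -
    obtain theta where th: "int_nonneg T theta" and thAE: "AE t in lebesgue. t \<in> {0..T} \<longrightarrow>
          (\<forall>x. lam t x \<le> theta t * (1 + norm x))" using lG by blast
    show ?thesis
    proof (intro exI[of _ "\<lambda>t. 2 * theta t"] conjI)
      have "(\<lambda>t. 2 *\<^sub>R theta t) integrable_on {0..T}"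
        using th unfolding int_nonneg_def by (intro integrable_cmul) auto
      then show "int_nonneg T (\<lambda>t. 2 * theta t)" using th unfolding int_nonneg_def by simp
      show "AE t in lebesgue. t \<in> {0..T} \<longrightarrow>
       (\<forall>x. \<forall>a\<in>cball 0 1. norm (f t x a) + \<bar>l t x a\<bar> \<le> 2 * theta t * (1 + norm x))"
        using thAE
      proof eventually_elim
        case (elim t)
        show ?case
        proof (intro impI allI ballI)
          assume t: "t \<in> {0..T}"
          fix x a
          have "norm (f t x a) + \<bar>l t x a\<bar> \<le> 2 * lam t x" by (rule Fb[OF t])
          also have "\<dots> \<le> 2 * (theta t * (1 + norm x))" using elim t by simp
          finally show "norm (f t x a) + \<bar>l t x a\<bar> \<le> 2 * theta t * (1 + norm x)" by simp
        qed
      qed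
    qed
  qed
  show ?thesis by (intro exI[of _ f] exI[of _ l] conjI G1 contf contl G4 G5)
qed

end
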